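(* Let $\tau$ be a tuple of positive integers, $0\le k\le\ell$, and $\hat P_\tau=C\sqcup O$ the $k$-decomposition. Let $F$ be a nonempty face of $\mathcal{O}_{C,O}(\tau)$ such that none of the nonnegativity inequalities $x_p\ge0$ ($p\in C$) and none of the chain inequalities holds with equality at every point of $F$ (i.e. $F$ is cut out by order inequalities only). Let $\varphi$ be the partition of $O$ associated with $F$ and $\pi=\varphi\cup\{\{c\}:c\in C\}$. Then $\pi$ is compatible, so the quotient poset $\hat P_\tau/\pi$ is defined; its minimum is $\{\hat0\}$ and its maximum is the block $T\in\varphi$ containing $\hat1$. Let $C_\pi=\{\{c\}:c\in C\}$, and let $\mathcal{O}_{C_\pi,\varphi}(\hat P_\tau/\pi)\subseteq\mathbb{R}^{\pi}$ be the set of $(x_B)_{B\in\pi}$ with $x_{\{\hat0\}}=0$, $x_T=1$, $x_B\ge 0$ for $B\in C_\pi$, $x_B\le x_{B'}$ for all $B,B'\in\varphi$ with $B$ covered by $B'$ in $\hat P_\tau/\pi$, and $x_{B_1}+\dots+x_{B_r}\le x_A$ for every saturated chain $\{\hat0\}\prec B_1\prec\dots\prec B_r\prec A$ in $\hat P_\tau/\pi$ with $B_1,\dots,B_r\in C_\pi$, $A\in\varphi$, $r\ge0$. Then the map $$\mathcal{O}_{C_\pi,\varphi}(\hat P_\tau/\pi)\to F,\quad (x_B)_{B\in\pi}\mapsto (x_{q(p)})_{p\in\hat P_\tau}$$ is an affine isomorphism, where $q:\hat P_\tau\to\hat P_\tau/\pi$ sends $p$ to its block. In particular the codimension of $F$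 equals $|O|-|\varphi|$.
   Context: Let $\tau=(\tau_1,\dots,\tau_\ell)$ be positive integers, $|\tau|=\sum_i\tau_i$. The poset $P_\tau$ has elements $y^i_j$ ($1\le i\le\ell$, $1\le j\le\tau_i$) with $y^i_j<y^{i'}_{j'}$ iff $i<i'$; $Y^i=\{y^i_1,\dots,y^i_{\tau_i}\}$. $\hat P_\tau=P_\tau\cup\{\hat0,\hat1\}$ with new minimum $\hat0$ and maximum $\hat1$, $Y^0=\{\hat0\}$, $Y^{\ell+1}=\{\hat1\}$; $\prec$ is the covering relation. The $k$-decomposition is $C=Y^0\cup\dots\cup Y^k$, $O=Y^{k+1}\cup\dots\cup Y^{\ell+1}$. The chain-order polytope $\mathcal{O}_{C,O}(\tau)\subseteq\mathbb{R}^{\hat P_\tau}$ consists of all $x$ with $x_{\hat0}=0$, $x_{\hat1}=1$, $x_p\ge0$ for $p\in C$ (nonnegativity inequalities), $x_a\le x_b$ for $a,b\in O$ with $a\prec b$ (order inequalities), and $x_{p_1}+\dots+x_{p_k}\le x_q$ for all $p_i\in Y^i$ ($1\le i\le k$), $q\in Y^{k+1}$ (chain inequalities). Codimension of a face $F$ is $|\tau|-\dim F$. The partition $\varphi$ of $O$ associated with $F$ has as blocks the connected components of the graph with vertex set $O$ and edges $\{a,b\}$ for all $a\prec b$ in $O$ with $x_a=x_b$ for every $x\in F$. A partition $\pi$ of $\hat P_\tau$ is compatible if the transitive closure of the relation "$B\le B'$ iff $p\le q$ for some $p\in B$, $q\in B'$" on blocks is antisymmetric; it is then a partial order, and $\hat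 P_\tau/\pi$ denotes the set of blocks with this order (the quotient poset). *)

theory Defs
  imports "HOL-Analysis.Analysis" "HOL-Library.Function_Algebras"
begin

instantiation "fun" :: (type, real_vector) real_vector
begin
definition scaleR_fun :: "real \<Rightarrow> ('a \<Rightarrow> 'b) \<Rightarrow> 'a \<Rightarrow> 'b"
  where "scaleR_fun r f = (\<lambda>x. r *\<^sub>R f x)"
instance
  by standard (auto simp: scaleR_fun_def plus_fun_def scaleR_add_right scaleR_add_left)
end

definition affdim :: "'a::real_vector set \<Rightarrow> nat" where
  "affdim S = dim {x - y | x y. x \<in> S \<and> y \<in> S}"

text \<open>\<open>\<tau> = [\<tau>_1,...,\<tau>_l]\<close>; element \<open>y^i_j\<close> is the pair \<open>(i,j)\<close>;
  \<open>\<hat>0 = (0,1)\<close>, \<open>\<hat>1 = (l+1,1)\<close>.\<close>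
definition Y :: "nat list \<Rightarrow> nat \<Rightarrow> (nat \<times> nat) set" where
  "Y \<tau> i = (if i = 0 then {(0,1)}
            else if i \<le> length \<tau> then {(i,j) | j. 1 \<le> j \<and> j \<le> \<tau> ! (i - 1)}
            else if i = Suc (length \<tau>) then {(Suc (length \<tau>), 1)}
            else {})"

definition Phat :: "nat list \<Rightarrow> (nat \<times> nat) set" where
  "Phat \<tau> = (\<Union>i\<in>{0..Suc (length \<tau>)}. Y \<tau> i)"

definition hat0 :: "nat \<times> nat" where "hat0 = (0,1)"
definition hat1 :: "nat list \<Rightarrow> nat \<times> nat" where "hat1 \<tau> = (Suc (length \<tau>), 1)"

definition ple :: "nat \<times> nat \<Rightarrow> nat \<times> nat \<Rightarrow> bool" where
  "ple p q \<longleftrightarrow> p = q \<or> fst p < fst q"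

definition covers :: "('a \<Rightarrow> 'a \<Rightarrow> bool) \<Rightarrow> 'a set \<Rightarrow> 'a \<Rightarrow> 'a \<Rightarrow> bool" where
  "covers le S a b \<longleftrightarrow> a \<in> S \<and> b \<in> S \<and> le a b \<and> a \<noteq> b \<and>
     \<not> (\<exists>c\<in>S. le a c \<and> le c b \<and> c \<noteq> a \<and> c \<noteq> b)"

definition Cset :: "nat list \<Rightarrow> nat \<Rightarrow> (nat \<times> nat) set" where
  "Cset \<tau> k = (\<Union>i\<in>{0..k}. Y \<tau> i)"
definition Oset :: "nat list \<Rightarrow> nat \<Rightarrow> (nat \<times> nat) set" where
  "Oset \<tau> k = (\<Union>i\<in>{Suc k..Suc (length \<tau>)}. Y \<tau> i)"

text \<open>Chain-order polytope, as a subset of \<open>\<real>^{\<hat>P_\<tau>}\<close> (functions vanishing outside \<open>\<hat>P_\<tau>\<close>).\<close>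
definition chain_order_polytope :: "nat list \<Rightarrow> nat \<Rightarrow> ((nat \<times> nat) \<Rightarrow> real) set" where
  "chain_order_polytope \<tau> k = {x.
     (\<forall>p. p \<notin> Phat \<tau> \<longrightarrow> x p = 0) \<and>
     x hat0 = 0 \<and> x (hat1 \<tau>) = 1 \<and>
     (\<forall>p\<in>Cset \<tau> k. 0 \<le> x p) \<and>
     (\<forall>a\<in>Oset \<tau> k. \<forall>b\<in>Oset \<tau> k. covers ple (Phat \<tau>) a b \<longrightarrow> x a \<le> x b) \<and>
     (\<forall>ps q. (\<forall>i\<in>{1..k}. ps i \<in> Y \<tau> i) \<and> q \<in> Y \<tau> (Suc k) \<longrightarrow>
        (\<Sum>i=1..k. x (ps i)) \<le> x q)}"

definition tight_edges :: "nat list \<Rightarrow> nat \<Rightarrow> ((nat \<times> nat) \<Rightarrow> real) set \<Rightarrow> ((nat \<times> nat) \<times> (nat \<times> nat)) set" where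
  "tight_edges \<tau> k F = {(a,b). a \<in> Oset \<tau> k \<and> b \<in> Oset \<tau> k \<and> covers ple (Phat \<tau>) a b \<and>
                         (\<forall>x\<in>F. x a = x b)}"

definition assoc_partition :: "nat list \<Rightarrow> nat \<Rightarrow> ((nat \<times> nat) \<Rightarrow> real) set \<Rightarrow> (nat \<times> nat) set set" where
  "assoc_partition \<tau> k F =
     (\<lambda>a. {b \<in> Oset \<tau> k. (a,b) \<in> (tight_edges \<tau> k F \<union> (tight_edges \<tau> k F)\<inverse>)\<^sup>*}) ` Oset \<tau> k"

definition pi_part :: "nat list \<Rightarrow> nat \<Rightarrow> ((nat \<times> nat) \<Rightarrow> real) set \<Rightarrow> (nat \<times> nat) set set" where
  "pi_part \<tau> k F = assoc_partition \<tau> k F \<union> (\<lambda>c. {c}) ` Cset \<tau> k"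

definition block_rel :: "('a \<Rightarrow> 'a \<Rightarrow> bool) \<Rightarrow> 'a set set \<Rightarrow> ('a set \<times> 'a set) set" where
  "block_rel le \<pi> = {(B,B'). B \<in> \<pi> \<and> B' \<in> \<pi> \<and> (\<exists>p\<in>B. \<exists>q\<in>B'. le p q)}"

definition compatible :: "('a \<Rightarrow> 'a \<Rightarrow> bool) \<Rightarrow> 'a set set \<Rightarrow> bool" where
  "compatible le \<pi> \<longleftrightarrow> antisym ((block_rel le \<pi>)\<^sup>+)"

definition quot_le :: "('a \<Rightarrow> 'a \<Rightarrow> bool) \<Rightarrow> 'a set set \<Rightarrow> 'a set \<Rightarrow> 'a set \<Rightarrow> bool" where
  "quot_le le \<pi> B B' \<longleftrightarrow> (B,B') \<in> (block_rel le \<pi>)\<^sup>+"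

definition block_of :: "'a set set \<Rightarrow> 'a \<Rightarrow> 'a set" where
  "block_of \<pi> p = (THE B. B \<in> \<pi> \<and> p \<in> B)"

definition top_block :: "nat list \<Rightarrow> nat \<Rightarrow> ((nat \<times> nat) \<Rightarrow> real) set \<Rightarrow> (nat \<times> nat) set" where
  "top_block \<tau> k F = block_of (pi_part \<tau> k F) (hat1 \<tau>)"

text \<open>The polytope \<open>O_{C_\<pi>,\<phi>}(\<hat>P_\<tau>/\<pi>) \<subseteq> \<real>^\<pi>\<close> (functions on blocks vanishing outside \<open>\<pi>\<close>).\<close>
definition quot_polytope :: "nat list \<Rightarrow> nat \<Rightarrow> ((nat \<times> nat) \<Rightarrow> real) set \<Rightarrow> ((nat \<times> nat) set \<Rightarrow> real) set" where
  "quot_polytope \<tau> k F = (let \<pi> = pi_part \<tau> k F; \<phi> = assoc_partition \<tau> k F;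
       C\<pi> = (\<lambda>c. {c}) ` Cset \<tau> k; T = top_block \<tau> k F;
       qcov = covers (quot_le ple \<pi>) \<pi> in
     {y. (\<forall>B. B \<notin> \<pi> \<longrightarrow> y B = 0) \<and>
         y {hat0} = 0 \<and> y T = 1 \<and>
         (\<forall>B\<in>C\<pi>. 0 \<le> y B) \<and>
         (\<forall>B\<in>\<phi>. \<forall>B'\<in>\<phi>. qcov B B' \<longrightarrow> y B \<le> y B') \<and>
         (\<forall>Bs A. set Bs \<subseteq> C\<pi> \<and> A \<in> \<phi> \<and>
              (let L = {hat0} # Bs @ [A] in \<forall>i. Suc i < length L \<longrightarrow> qcov (L ! i) (L ! Suc i))
            \<longrightarrow> sum_list (map y Bs) \<le> y A)})"

definition lift_map :: "nat list \<Rightarrow> nat \<Rightarrow> ((nat \<times> nat) \<Rightarrow> real) set \<Rightarrow> ((nat \<times> nat) set \<Rightarrow> real) \<Rightarrow> (nat \<times> nat) \<Rightarrow> real" where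
  "lift_map \<tau> k F y = (\<lambda>p. if p \<in> Phat \<tau> then y (block_of (pi_part \<tau> k F) p) else 0)"

end

theory Submission imports Defs begin

lemma scaleR_fun_apply[simp]: "(r *\<^sub>R (f::'a\<Rightarrow>real)) x = r * f x"
  by (simp add: scaleR_fun_def)

lemma sum_fun_apply[simp]: "(sum (f::'b \<Rightarrow> 'a\<Rightarrow>real) A) x = sum (\<lambda>a. f a x) A"
  by (induction A rule: infinite_finite_induct) auto

lemma Y_fst: "p \<in> Y \<tau> i \<Longrightarrow> fst p = i"
  by (auto simp: Y_def split: if_splits)

lemma Y_finite: "finite (Y \<tau> i)"
proof -
  have "Y \<tau> i \<subseteq> {i} \<times> {0..(if i = 0 then 1 else if i \<le> length \<tau> then \<tau> ! (i - 1) else 1)}"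
    by (auto simp: Y_def)
  then show ?thesis by (rule finite_subset) auto
qed

lemma Phat_finite: "finite (Phat \<tau>)"
  by (auto simp: Phat_def Y_finite)

lemma mem_Phat: "p \<in> Phat \<tau> \<longleftrightarrow> fst p \<le> Suc (length \<tau>) \<and> p \<in> Y \<tau> (fst p)"
  by (auto simp: Phat_def dest: Y_fst)

lemma ple_refl[simp]: "ple p p" by (simp add: ple_def)
lemma ple_trans: "ple p q \<Longrightarrow> ple q r \<Longrightarrow> ple p r" by (auto simp: ple_def)

definition lin :: "(('a \<Rightarrow> real) \<Rightarrow> real) \<Rightarrow> bool" where
  "lin h \<longleftrightarrow> (\<forall>x y a b. h (a *\<^sub>R x + b *\<^sub>R y) = a * h x + b * h y)"

lemma lin_comb: "lin h \<Longrightarrow> h (a *\<^sub>R x + b *\<^sub>R y) = a * h x + b * h y"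
  unfolding lin_def by blast

lemma lin_add: "lin h \<Longrightarrow> h (x + e *\<^sub>R v) = h x + e * h v"
  using lin_comb[of h 1 x e v] by simp

definition intv :: "('a \<Rightarrow> 'a \<Rightarrow> bool) \<Rightarrow> 'a set \<Rightarrow> 'a \<Rightarrow> 'a \<Rightarrow> 'a set" where
  "intv le S a b = {c\<in>S. le a c \<and> le c b \<and> c \<noteq> a \<and> c \<noteq> b}"

lemma cover_exists:
  assumes fin: "finite S"
    and refl: "\<forall>a\<in>S. le a a"
    and trans: "\<forall>a\<in>S. \<forall>b\<in>S. \<forall>c\<in>S. le a b \<longrightarrow> le b c \<longrightarrow> le a c"
    and anti: "\<forall>a\<in>S. \<forall>b\<in>S. le a b \<longrightarrow> le b a \<longrightarrow> a = b"
  shows "a \<in> S \<Longrightarrow> b \<in> S \<Longrightarrow> le a b \<Longrightarrow> a \<noteq> b \<Longrightarrow> \<exists>c\<in>S. covers le S a c \<and> le c b"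
proof (induction "card (intv le S a b)" arbitrary: b rule: less_induct)
  case less
  show ?case
  proof (cases "covers le S a b")
    case True then show ?thesis using less.prems refl by blast
  next
    case False
    then obtain c where c: "c \<in> S" "le a c" "le c b" "c \<noteq> a" "c \<noteq> b"
      using less.prems unfolding covers_def by blast
    have sub: "intv le S a c \<subset> intv le S a b"
    proof
      show "intv le S a c \<subseteq> intv le S a b"
      proof
        fix d assume "d \<in> intv le S a c"
        then have d: "d \<in> S" "le a d" "le d c" "d \<noteq> a" "d \<noteq> c" unfolding intv_def by auto
        have "le d b" using trans d c less.prems by blast
        moreover have "d \<noteq> b"
        proof
          assume "d = b"
          then have "c = b" using anti d c less.prems by blast
          then show False using c by simp
        qed
        ultimately show "d \<in> intv le S a b" using d unfolding intv_def by auto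
      qed
      show "intv le S a c \<noteq> intv le S a b"
      proof
        assume "intv le S a c = intv le S a b"
        moreover have "c \<in> intv le S a b" using c unfolding intv_def by auto
        moreover have "c \<notin> intv le S a c" unfolding intv_def by auto
        ultimately show False by simp
      qed
    qed
    have "card (intv le S a c) < card (intv le S a b)"
      by (rule psubset_card_mono[OF _ sub]) (auto simp: intv_def fin)
    from less.hyps[OF this less.prems(1) c(1) c(2) c(4)[symmetric]]
    obtain c' where c': "c' \<in> S" "covers le S a c'" "le c' c" by blast
    then have "le c' b" using trans c less.prems by blast
    then show ?thesis using c' by blast
  qed
qed

lemma cover_mono:
  assumes fin: "finite S"
    and refl: "\<forall>a\<in>S. le a a"
    and trans: "\<forall>a\<in>S. \<forall>b\<in>S. \<forall>c\<in>S. le a b \<longrightarrow> le b c \<longrightarrow> le a c"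
    and anti: "\<forall>a\<in>S. \<forall>b\<in>S. le a b \<longrightarrow> le b a \<longrightarrow> a = b"
    and y: "\<forall>a\<in>S. \<forall>b\<in>S. covers le S a b \<longrightarrow> (y a :: real) \<le> y b"
  shows "a \<in> S \<Longrightarrow> b \<in> S \<Longrightarrow> le a b \<Longrightarrow> y a \<le> y b"
proof (induction "card (intv le S a b)" arbitrary: a rule: less_induct)
  case less
  show ?case
  proof (cases "a = b")
    case True then show ?thesis by simp
  next
    case False
    obtain c where c: "c \<in> S" "covers le S a c" "le c b"
      using cover_exists[OF fin refl trans anti less.prems False] by blast
    have ac: "y a \<le> y c" using y c less.prems by blast
    have cc: "le a c" "a \<noteq> c" using c(2) unfolding covers_def by auto
    show ?thesis
    proof (cases "c = b")
      case True then show ?thesis using ac by simp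
    next
      case cb: False
      have sub: "intv le S c b \<subset> intv le S a b"
      proof
        show "intv le S c b \<subseteq> intv le S a b"
        proof
          fix d assume "d \<in> intv le S c b"
          then have d: "d \<in> S" "le c d" "le d b" "d \<noteq> c" "d \<noteq> b" unfolding intv_def by auto
          have "le a d" using trans d c less.prems cc by blast
          moreover have "d \<noteq> a"
          proof
            assume "d = a"
            then have "a = c" using anti d c less.prems cc by blast
            then show False using cc by simp
          qed
          ultimately show "d \<in> intv le S a b" using d unfolding intv_def by auto
        qed
        show "intv le S c b \<noteq> intv le S a b"
        proof
          assume "intv le S c b = intv le S a b"
          moreover have "c \<in> intv le S a b" using c cc cb unfolding intv_def by auto
          moreover have "c \<notin> intv le S c b" unfolding intv_def by auto
          ultimately show False by simp
        qed
      qed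
      have "card (intv le S c b) < card (intv le S a b)"
        by (rule psubset_card_mono[OF _ sub]) (auto simp: intv_def fin)
      from less.hyps[OF this c(1) less.prems(2) c(3)] have "y c \<le> y b" .
      then show ?thesis using ac by simp
    qed
  qed
qed

locale pset =
  fixes \<tau> :: "nat list" and k :: nat and F :: "((nat \<times> nat) \<Rightarrow> real) set"
  assumes pos: "\<forall>t\<in>set \<tau>. 0 < t"
    and k: "k \<le> length \<tau>"
    and face: "F face_of chain_order_polytope \<tau> k"
    and ne: "F \<noteq> {}"
    and nonneg_not_tight: "\<forall>p\<in>Cset \<tau> k - {hat0}. \<not> (\<forall>x\<in>F. x p = 0)"
    and chain_not_tight: "\<forall>ps q. (\<forall>i\<in>{1..k}. ps i \<in> Y \<tau> i) \<and> q \<in> Y \<tau> (Suc k) \<longrightarrow>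
                              \<not> (\<forall>x\<in>F. (\<Sum>i=1..k. x (ps i)) = x q)"
begin

abbreviation "L \<equiv> length \<tau>"
abbreviation "PP \<equiv> Phat \<tau>"
abbreviation "CS \<equiv> Cset \<tau> k"
abbreviation "OS \<equiv> Oset \<tau> k"
abbreviation "PT \<equiv> chain_order_polytope \<tau> k"
abbreviation "EE \<equiv> tight_edges \<tau> k F"
abbreviation "RR \<equiv> (EE \<union> EE\<inverse>)\<^sup>*"
abbreviation "\<phi> \<equiv> assoc_partition \<tau> k F"
abbreviation "\<pi> \<equiv> pi_part \<tau> k F"
abbreviation "Cpi \<equiv> (\<lambda>c. {c}) ` CS"
definition "cmp a = {b \<in> OS. (a,b) \<in> RR}"

lemma e_in: "i \<le> Suc L \<Longrightarrow> (i,1) \<in> Y \<tau> i"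
proof -
  assume i: "i \<le> Suc L"
  { assume "1 \<le> i" "i \<le> L"
    then have "\<tau> ! (i - 1) \<in> set \<tau>" by auto
    with pos have "0 < \<tau> ! (i - 1)" by auto }
  then show ?thesis using i by (auto simp: Y_def)
qed

lemma e_PP: "i \<le> Suc L \<Longrightarrow> (i,1) \<in> PP"
  using e_in by (auto simp: mem_Phat)

lemma PP_fst: "p \<in> PP \<Longrightarrow> fst p \<le> Suc L"
  by (simp add: mem_Phat)

lemma C_iff: "p \<in> CS \<longleftrightarrow> p \<in> PP \<and> fst p \<le> k"
  using k by (auto simp: Cset_def mem_Phat dest: Y_fst)

lemma O_iff: "p \<in> OS \<longleftrightarrow> p \<in> PP \<and> k < fst p"
  by (auto simp: Oset_def mem_Phat dest: Y_fst)

lemma hat0_unique: "p \<in> PP \<Longrightarrow> fst p = 0 \<Longrightarrow> p = hat0"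
  by (auto simp: mem_Phat Y_def hat0_def)

lemma hat1_unique: "p \<in> PP \<Longrightarrow> fst p = Suc L \<Longrightarrow> p = hat1 \<tau>"
  by (auto simp: mem_Phat Y_def hat1_def)

lemma hat0_PP: "hat0 \<in> PP" using e_PP[of 0] by (simp add: hat0_def)
lemma hat1_PP: "hat1 \<tau> \<in> PP" using e_PP[of "Suc L"] by (simp add: hat1_def)
lemma hat0_C: "hat0 \<in> CS" using hat0_PP by (simp add: C_iff hat0_def)
lemma hat1_O: "hat1 \<tau> \<in> OS" using hat1_PP k by (simp add: O_iff hat1_def)

lemma CO_disj: "p \<in> CS \<Longrightarrow> p \<in> OS \<Longrightarrow> False"
  by (simp add: C_iff O_iff)

lemma covers_iff: "covers ple PP a b \<longleftrightarrow> a \<in> PP \<and> b \<in> PP \<and> fst b = Suc (fst a)"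
proof
  assume c: "covers ple PP a b"
  then have ab: "a \<in> PP" "b \<in> PP" "fst a < fst b"
    unfolding covers_def ple_def by auto
  show "a \<in> PP \<and> b \<in> PP \<and> fst b = Suc (fst a)"
  proof (rule ccontr)
    assume "\<not> ?thesis"
    with ab have lt: "Suc (fst a) < fst b" by auto
    then have m: "(Suc (fst a), 1) \<in> PP" using PP_fst[OF ab(2)] by (intro e_PP) auto
    have "ple a (Suc (fst a), 1)" "ple (Suc (fst a), 1) b" "(Suc (fst a), 1) \<noteq> a" "(Suc (fst a), 1) \<noteq> b"
      using lt unfolding ple_def by (auto simp: prod_eq_iff)
    then show False using c m unfolding covers_def by blast
  qed
next
  assume "a \<in> PP \<and> b \<in> PP \<and> fst b = Suc (fst a)"
  then show "covers ple PP a b" unfolding covers_def ple_def by auto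
qed

lemma hat0_le: "p \<in> PP \<Longrightarrow> ple hat0 p"
proof -
  assume p: "p \<in> PP"
  show ?thesis
  proof (cases "fst p = 0")
    case True then show ?thesis using hat0_unique[OF p] by simp
  next
    case False then show ?thesis unfolding ple_def hat0_def by simp
  qed
qed

lemma le_hat1: "p \<in> PP \<Longrightarrow> ple p (hat1 \<tau>)"
proof -
  assume p: "p \<in> PP"
  show ?thesis
  proof (cases "fst p = Suc L")
    case True then show ?thesis using hat1_unique[OF p] by simp
  next
    case False then show ?thesis using PP_fst[OF p] unfolding ple_def hat1_def by simp
  qed
qed

lemma PT_D: "x \<in> PT \<Longrightarrow> (\<forall>p. p \<notin> PP \<longrightarrow> x p = 0) \<and>
     x hat0 = 0 \<and> x (hat1 \<tau>) = 1 \<and>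
     (\<forall>p\<in>CS. 0 \<le> x p) \<and>
     (\<forall>a\<in>OS. \<forall>b\<in>OS. covers ple PP a b \<longrightarrow> x a \<le> x b) \<and>
     (\<forall>ps q. (\<forall>i\<in>{1..k}. ps i \<in> Y \<tau> i) \<and> q \<in> Y \<tau> (Suc k) \<longrightarrow>
        (\<Sum>i=1..k. x (ps i)) \<le> x q)"
  unfolding chain_order_polytope_def mem_Collect_eq by assumption

lemma PT_out: "x \<in> PT \<Longrightarrow> p \<notin> PP \<Longrightarrow> x p = 0"
proof -
  assume x: "x \<in> PT" and p: "p \<notin> PP"
  have "\<forall>p. p \<notin> PP \<longrightarrow> x p = 0" using PT_D[OF x] by (rule conjunct1)
  then show "x p = 0" using p by blast
qed
lemma PT_hat0: "x \<in> PT \<Longrightarrow> x hat0 = 0"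
  using PT_D[THEN conjunct2, THEN conjunct1] by simp
lemma PT_hat1: "x \<in> PT \<Longrightarrow> x (hat1 \<tau>) = 1"
  using PT_D[THEN conjunct2, THEN conjunct2, THEN conjunct1] by simp
lemma PT_C: "x \<in> PT \<Longrightarrow> p \<in> CS \<Longrightarrow> 0 \<le> x p"
  using PT_D[THEN conjunct2, THEN conjunct2, THEN conjunct2, THEN conjunct1] by simp
lemma PT_cov: "x \<in> PT \<Longrightarrow> a \<in> OS \<Longrightarrow> b \<in> OS \<Longrightarrow> fst b = Suc (fst a) \<Longrightarrow> x a \<le> x b"
proof -
  assume x: "x \<in> PT" and ab: "a \<in> OS" "b \<in> OS" "fst b = Suc (fst a)"
  then have "covers ple PP a b" by (simp add: covers_iff O_iff)
  with ab PT_D[OF x, THEN conjunct2, THEN conjunct2, THEN conjunct2, THEN conjunct2, THEN conjunct1]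
  show ?thesis by simp
qed
lemma PT_chain: "x \<in> PT \<Longrightarrow> (\<forall>i\<in>{1..k}. ps i \<in> Y \<tau> i) \<Longrightarrow> q \<in> Y \<tau> (Suc k) \<Longrightarrow>
        (\<Sum>i=1..k. x (ps i)) \<le> x q"
proof -
  assume x: "x \<in> PT" and h: "\<forall>i\<in>{1..k}. ps i \<in> Y \<tau> i" "q \<in> Y \<tau> (Suc k)"
  have "\<forall>ps q. (\<forall>i\<in>{1..k}. ps i \<in> Y \<tau> i) \<and> q \<in> Y \<tau> (Suc k) \<longrightarrow>
        (\<Sum>i=1..k. x (ps i)) \<le> x q"
    using PT_D[OF x, THEN conjunct2, THEN conjunct2, THEN conjunct2, THEN conjunct2, THEN conjunct2] .
  then show ?thesis using h by blast
qed

lemma PT_mono_aux: "x \<in> PT \<Longrightarrow> a \<in> OS \<Longrightarrow> b \<in> OS \<Longrightarrow> fst b = fst a + Suc d \<Longrightarrow> x a \<le> x b"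
proof (induction d arbitrary: b)
  case 0 then show ?case using PT_cov by simp
next
  case (Suc d)
  define c where "c = (fst a + Suc d, 1::nat)"
  have "fst b \<le> Suc L" using Suc.prems(3) O_iff PP_fst by blast
  then have "c \<in> PP" unfolding c_def using Suc.prems(4) by (intro e_PP) simp
  then have cO: "c \<in> OS" using Suc.prems(2) by (simp add: O_iff c_def)
  have "x a \<le> x c" using Suc.IH[OF Suc.prems(1,2) cO] by (simp add: c_def)
  also have "x c \<le> x b" using PT_cov[OF Suc.prems(1) cO Suc.prems(3)] Suc.prems(4) by (simp add: c_def)
  finally show ?case .
qed

lemma PT_mono: "x \<in> PT \<Longrightarrow> a \<in> OS \<Longrightarrow> b \<in> OS \<Longrightarrow> fst a < fst b \<Longrightarrow> x a \<le> x b"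
  using PT_mono_aux[of x a b "fst b - fst a - 1"] by simp

lemma PT_mono_le: "x \<in> PT \<Longrightarrow> a \<in> OS \<Longrightarrow> b \<in> OS \<Longrightarrow> ple a b \<Longrightarrow> x a \<le> x b"
  using PT_mono[of x a b] unfolding ple_def by auto

lemma ps0_ok: "\<forall>i\<in>{1..k}. (i,1) \<in> Y \<tau> i"
proof
  fix i assume "i \<in> {1..k}"
  then show "(i,1) \<in> Y \<tau> i" using k by (intro e_in) simp
qed

lemma PT_O_nonneg: "x \<in> PT \<Longrightarrow> q \<in> OS \<Longrightarrow> 0 \<le> x q"
proof -
  assume x: "x \<in> PT" and q: "q \<in> OS"
  define q0 where "q0 = (Suc k, 1::nat)"
  have q0Y: "q0 \<in> Y \<tau> (Suc k)" unfolding q0_def by (rule e_in) (use k in simp)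
  then have q0O: "q0 \<in> OS" using k by (auto simp: O_iff mem_Phat Y_fst q0_def)
  have "0 \<le> (\<Sum>i=1..k. x (i,1))"
    using ps0_ok k by (intro sum_nonneg PT_C[OF x]) (auto simp: C_iff mem_Phat dest: Y_fst)
  also have "\<dots> \<le> x q0" using PT_chain[OF x ps0_ok q0Y] .
  finally have 0: "0 \<le> x q0" .
  show ?thesis
  proof (cases "fst q = Suc k")
    case True
    then have "q \<in> Y \<tau> (Suc k)" using q by (simp add: O_iff mem_Phat)
    then show ?thesis using PT_chain[OF x ps0_ok] 0 \<open>0 \<le> (\<Sum>i=1..k. x (i,1))\<close> by fastforce
  next
    case False
    then have "fst q0 < fst q" using q by (simp add: O_iff q0_def)
    then show ?thesis using PT_mono[OF x q0O q] 0 by simp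
  qed
qed

lemma F_PT: "F \<subseteq> PT" using face by (rule face_of_imp_subset)
lemma F_convex: "convex F" using face by (rule face_of_imp_convex)

lemma EE_iff: "(a,b) \<in> EE \<longleftrightarrow> a \<in> OS \<and> b \<in> OS \<and> fst b = Suc (fst a) \<and> (\<forall>x\<in>F. x a = x b)"
  unfolding tight_edges_def by (auto simp: covers_iff O_iff)

lemma RR_sym: "(a,b) \<in> RR \<Longrightarrow> (b,a) \<in> RR"
proof -
  assume "(a,b) \<in> RR"
  then have "(b,a) \<in> (RR)\<inverse>" by simp
  also have "(RR)\<inverse> = ((EE \<union> EE\<inverse>)\<inverse>)\<^sup>*" by (simp add: rtrancl_converse)
  also have "(EE \<union> EE\<inverse>)\<inverse> = EE \<union> EE\<inverse>" by auto
  finally show ?thesis .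
qed

lemma RR_val: "(a,b) \<in> RR \<Longrightarrow> x \<in> F \<Longrightarrow> x a = x b"
proof (induction rule: rtrancl_induct)
  case base then show ?case by simp
next
  case (step y z) then show ?case by (auto simp: EE_iff)
qed

lemma RR_O: "(a,b) \<in> RR \<Longrightarrow> a \<in> OS \<Longrightarrow> b \<in> OS"
proof (induction rule: rtrancl_induct)
  case base then show ?case by simp
next
  case (step y z) then show ?case by (auto simp: EE_iff)
qed

lemma cmp_mem: "b \<in> cmp a \<longleftrightarrow> b \<in> OS \<and> (a,b) \<in> RR"
  by (simp add: cmp_def)

lemma cmp_self: "a \<in> OS \<Longrightarrow> a \<in> cmp a"
  by (simp add: cmp_def)

lemma cmp_sub: "cmp a \<subseteq> OS" by (auto simp: cmp_def)

lemma cmp_eq: "(a,b) \<in> RR \<Longrightarrow> cmp a = cmp b"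
proof -
  assume ab: "(a,b) \<in> RR"
  have "(a,c) \<in> RR \<longleftrightarrow> (b,c) \<in> RR" for c
  proof
    assume "(a,c) \<in> RR" then show "(b,c) \<in> RR" using RR_sym[OF ab] by (rule rtrancl_trans[rotated])
  next
    assume "(b,c) \<in> RR" then show "(a,c) \<in> RR" using ab by (rule rtrancl_trans[rotated])
  qed
  then show ?thesis unfolding cmp_def by simp
qed

lemma phi_def': "\<phi> = cmp ` OS"
  unfolding assoc_partition_def cmp_def by simp

lemma pi_def': "\<pi> = cmp ` OS \<union> Cpi"
  unfolding pi_part_def phi_def' by simp

definition "G1 = (\<lambda>p x. x p) ` (CS - {hat0})"
definition "G2 = (\<lambda>(a,b) x. x b - x a) ` {(a,b). a \<in> OS \<and> b \<in> OS \<and> fst b = Suc (fst a) \<and> (a,b) \<notin> EE}"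
definition "G3 = (\<lambda>(ps,q) x. x q - (\<Sum>i=1..k. x (ps i))) ` (PiE {1..k} (Y \<tau>) \<times> Y \<tau> (Suc k))"
definition "GG = G1 \<union> G2 \<union> G3"

lemma CS_fin: "finite CS" using Phat_finite by (rule finite_subset[rotated]) (auto simp: C_iff)
lemma OS_fin: "finite OS" using Phat_finite by (rule finite_subset[rotated]) (auto simp: O_iff)

lemma GG_fin: "finite GG"
proof -
  have "finite G1" unfolding G1_def using CS_fin by simp
  moreover have "finite G2" unfolding G2_def
    by (rule finite_imageI, rule finite_subset[of _ "OS \<times> OS"]) (auto simp: OS_fin)
  moreover have "finite G3" unfolding G3_def
    by (intro finite_imageI finite_cartesian_product finite_PiE) (auto simp: Y_finite)
  ultimately show ?thesis unfolding GG_def by simp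
qed

lemma GG_lin: "h \<in> GG \<Longrightarrow> lin h"
  unfolding GG_def G1_def G2_def G3_def lin_def
  by (auto simp: algebra_simps sum.distrib sum_distrib_left)

lemma G3_eq: "(\<forall>i\<in>{1..k}. ps i \<in> Y \<tau> i) \<Longrightarrow> q \<in> Y \<tau> (Suc k) \<Longrightarrow>
   (\<lambda>x. x q - (\<Sum>i=1..k. x (ps i))) \<in> G3"
proof -
  assume h: "\<forall>i\<in>{1..k}. ps i \<in> Y \<tau> i" "q \<in> Y \<tau> (Suc k)"
  have mem: "(restrict ps {1..k}, q) \<in> PiE {1..k} (Y \<tau>) \<times> Y \<tau> (Suc k)" using h by auto
  have "(\<Sum>i=1..k. x (restrict ps {1..k} i)) = (\<Sum>i=1..k. x (ps i))" for x :: "nat \<times> nat \<Rightarrow> real"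
    by (rule sum.cong) auto
  then have eq: "(\<lambda>x. x q - (\<Sum>i=1..k. x (ps i))) =
     (\<lambda>(ps,q) x. x q - (\<Sum>i=1..k. x (ps i))) (restrict ps {1..k}, q)"
    by simp
  show ?thesis unfolding G3_def using mem eq by (rule rev_image_eqI)
qed

lemma G3_D: "h \<in> G3 \<Longrightarrow> \<exists>ps q. (\<forall>i\<in>{1..k}. ps i \<in> Y \<tau> i) \<and> q \<in> Y \<tau> (Suc k) \<and>
   h = (\<lambda>x. x q - (\<Sum>i=1..k. x (ps i)))"
proof -
  assume "h \<in> G3"
  then obtain ps q where pq: "(ps,q) \<in> PiE {1..k} (Y \<tau>) \<times> Y \<tau> (Suc k)"
    "h = (\<lambda>x. x q - (\<Sum>i=1..k. x (ps i)))" unfolding G3_def by auto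
  then show ?thesis by (intro exI[of _ ps] exI[of _ q]) (auto simp: PiE_def Pi_def)
qed

lemma GG_nonneg: "h \<in> GG \<Longrightarrow> x \<in> PT \<Longrightarrow> 0 \<le> h x"
proof -
  assume h: "h \<in> GG" and x: "x \<in> PT"
  { assume "h \<in> G1" then have ?thesis unfolding G1_def using PT_C[OF x] by auto }
  moreover
  { assume "h \<in> G2" then have ?thesis unfolding G2_def using PT_cov[OF x] by auto }
  moreover
  { assume "h \<in> G3"
    then obtain ps q where "\<forall>i\<in>{1..k}. ps i \<in> Y \<tau> i" "q \<in> Y \<tau> (Suc k)"
      "h = (\<lambda>x. x q - (\<Sum>i=1..k. x (ps i)))" using G3_D by blast
    then have ?thesis using PT_chain[OF x] by simp }
  ultimately show ?thesis using h unfolding GG_def by blast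
qed

lemma GG_wit: "h \<in> GG \<Longrightarrow> \<exists>x\<in>F. 0 < h x"
proof -
  assume h: "h \<in> GG"
  have nn: "x \<in> F \<Longrightarrow> 0 \<le> h x" for x using GG_nonneg[OF h] F_PT by blast
  have "\<exists>x\<in>F. h x \<noteq> 0"
  proof -
    { assume "h \<in> G1"
      then obtain p where p: "p \<in> CS - {hat0}" "h = (\<lambda>x. x p)" unfolding G1_def by auto
      then have ?thesis using nonneg_not_tight by auto }
    moreover
    { assume "h \<in> G2"
      then obtain a b where ab: "a \<in> OS" "b \<in> OS" "fst b = Suc (fst a)" "(a,b) \<notin> EE"
        "h = (\<lambda>x. x b - x a)" unfolding G2_def by auto
      then have "\<not> (\<forall>x\<in>F. x a = x b)" by (simp add: EE_iff)
      then obtain x where "x \<in> F" "x a \<noteq> x b" by blast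
      then have ?thesis using ab(5) by (metis right_minus_eq) }
    moreover
    { assume "h \<in> G3"
      then obtain ps q where pq: "\<forall>i\<in>{1..k}. ps i \<in> Y \<tau> i" "q \<in> Y \<tau> (Suc k)"
        "h = (\<lambda>x. x q - (\<Sum>i=1..k. x (ps i)))" using G3_D by blast
      then have "\<not> (\<forall>x\<in>F. (\<Sum>i=1..k. x (ps i)) = x q)" using chain_not_tight by blast
      then obtain x where "x \<in> F" "(\<Sum>i=1..k. x (ps i)) \<noteq> x q" by blast
      then have ?thesis using pq(3) by (metis right_minus_eq) }
    ultimately show ?thesis using h unfolding GG_def by blast
  qed
  then show ?thesis using nn by force
qed

lemma generic_aux: "finite H \<Longrightarrow> H \<subseteq> GG \<Longrightarrow> \<exists>z\<in>F. \<forall>h\<in>H. 0 < h z"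
proof (induction H rule: finite_induct)
  case empty then show ?case using ne by auto
next
  case (insert h0 H)
  then obtain z where z: "z \<in> F" "\<forall>h\<in>H. 0 < h z" by auto
  obtain w where w: "w \<in> F" "0 < h0 w" using GG_wit insert.prems by blast
  define m where "m = (1/2) *\<^sub>R z + (1/2) *\<^sub>R w"
  have mF: "m \<in> F" unfolding m_def using F_convex z(1) w(1) by (intro convexD) auto
  have "0 < h m" if hh: "h \<in> insert h0 H" for h
  proof -
    have hG: "h \<in> GG" using hh insert.prems by auto
    have "h m = (1/2) * h z + (1/2) * h w" unfolding m_def using GG_lin[OF hG] by (rule lin_comb)
    moreover have "0 \<le> h z" "0 \<le> h w" using GG_nonneg[OF hG] F_PT z(1) w(1) by auto
    moreover have "0 < h z \<or> 0 < h w" using hh z w by auto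
    ultimately show ?thesis by linarith
  qed
  then show ?case using mF by blast
qed

definition "z = (SOME z. z \<in> F \<and> (\<forall>h\<in>GG. 0 < h z))"

lemma z_prop: "z \<in> F \<and> (\<forall>h\<in>GG. 0 < h z)"
proof -
  have "\<exists>z. z \<in> F \<and> (\<forall>h\<in>GG. 0 < h z)" using generic_aux[OF GG_fin order_refl] by blast
  then show ?thesis unfolding z_def by (rule someI_ex)
qed

lemma z_F: "z \<in> F" and z_pos: "h \<in> GG \<Longrightarrow> 0 < h z"
  using z_prop by auto

lemma z_PT: "z \<in> PT" using z_F F_PT by auto

lemma z_cov: "a \<in> OS \<Longrightarrow> b \<in> OS \<Longrightarrow> fst b = Suc (fst a) \<Longrightarrow> z a = z b \<Longrightarrow> (a,b) \<in> EE"
proof (rule ccontr)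
  assume ab: "a \<in> OS" "b \<in> OS" "fst b = Suc (fst a)" "z a = z b" "(a,b) \<notin> EE"
  then have "(\<lambda>x. x b - x a) \<in> GG" unfolding GG_def G2_def by (auto intro!: image_eqI[where x="(a,b)"])
  then have "0 < z b - z a" by (rule z_pos)
  then show False using ab by simp
qed

lemma z_chainR_aux: "a \<in> OS \<Longrightarrow> b \<in> OS \<Longrightarrow> fst b = fst a + Suc d \<Longrightarrow> z a = z b \<Longrightarrow> (a,b) \<in> RR"
proof (induction d arbitrary: b)
  case 0 then show ?case using z_cov[of a b] by auto
next
  case (Suc d)
  define c where "c = (fst a + Suc d, 1::nat)"
  have "fst b \<le> Suc L" using Suc.prems(2) O_iff PP_fst by blast
  then have "c \<in> PP" unfolding c_def using Suc.prems(3) by (intro e_PP) simp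
  then have cO: "c \<in> OS" using Suc.prems(1) by (simp add: O_iff c_def)
  have "z a \<le> z c" using PT_mono[OF z_PT Suc.prems(1) cO] by (simp add: c_def)
  moreover have "z c \<le> z b" using PT_cov[OF z_PT cO Suc.prems(2)] Suc.prems(3) by (simp add: c_def)
  ultimately have eq: "z a = z c" "z c = z b" using Suc.prems(4) by auto
  have "(a,c) \<in> RR" using Suc.IH[OF Suc.prems(1) cO] eq by (simp add: c_def)
  moreover have "(c,b) \<in> EE" using z_cov[OF cO Suc.prems(2)] eq Suc.prems(3) by (simp add: c_def)
  ultimately show ?case by (meson UnI1 rtrancl.rtrancl_into_rtrancl)
qed

lemma z_chainR: "a \<in> OS \<Longrightarrow> b \<in> OS \<Longrightarrow> fst a < fst b \<Longrightarrow> z a = z b \<Longrightarrow> (a,b) \<in> RR"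
  using z_chainR_aux[of a b "fst b - fst a - 1"] by simp

definition "V0 = {v. (\<forall>p. p \<notin> PP \<longrightarrow> v p = 0) \<and> v hat0 = 0 \<and> v (hat1 \<tau>) = 0 \<and>
   (\<forall>a b. (a,b) \<in> EE \<longrightarrow> v a = v b)}"
definition "GS = {x \<in> PT. \<forall>a b. (a,b) \<in> EE \<longrightarrow> x a = x b}"

lemma F_GS: "F \<subseteq> GS"
  using F_PT unfolding GS_def by (auto simp: EE_iff)

lemma z_GS: "z \<in> GS" using z_F F_GS by auto

lemma perturb: "v \<in> V0 \<Longrightarrow> \<exists>e>0. z + e *\<^sub>R v \<in> GS"
proof -
  assume v: "v \<in> V0"
  define e where "e = Min (insert 1 ((\<lambda>h. h z / (\<bar>h v\<bar> + 1)) ` GG))"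
  have fin: "finite (insert 1 ((\<lambda>h. h z / (\<bar>h v\<bar> + 1)) ` GG))" by (intro finite.insertI finite_imageI GG_fin)
  have "0 < h z / (\<bar>h v\<bar> + 1)" if "h \<in> GG" for h
    using z_pos[OF that] by (intro divide_pos_pos) auto
  then have e_pos: "0 < e" unfolding e_def using fin
    by (subst Min_gr_iff) auto
  have e_le: "e \<le> h z / (\<bar>h v\<bar> + 1)" if "h \<in> GG" for h
    unfolding e_def using fin that by (intro Min_le) auto
  define w where "w = z + e *\<^sub>R v"
  have hpos: "0 < h w" if hG: "h \<in> GG" for h
  proof -
    have eq: "h w = h z + e * h v" unfolding w_def using GG_lin[OF hG] by (rule lin_add)
    have "e * (\<bar>h v\<bar> + 1) \<le> h z" using e_le[OF hG]
      by (simp add: pos_le_divide_eq add_pos_nonneg)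
    then have a: "e * \<bar>h v\<bar> + e \<le> h z" by (simp add: algebra_simps)
    have "e * (- \<bar>h v\<bar>) \<le> e * h v" using e_pos by (intro mult_left_mono) auto
    then have b: "- (e * \<bar>h v\<bar>) \<le> e * h v" by simp
    show ?thesis using a b eq e_pos by linarith
  qed
  have wp: "w p = z p + e * v p" for p unfolding w_def by simp
  have vD: "\<forall>p. p \<notin> PP \<longrightarrow> v p = 0" "v hat0 = 0" "v (hat1 \<tau>) = 0"
      "\<And>a b. (a,b) \<in> EE \<Longrightarrow> v a = v b"
    using v unfolding V0_def by auto
  have ztight: "(a,b) \<in> EE \<Longrightarrow> z a = z b" for a b using z_F by (auto simp: EE_iff)
  have "w \<in> PT"
    unfolding chain_order_polytope_def mem_Collect_eq
  proof (intro conjI allI ballI impI)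
    fix p assume p: "p \<notin> PP"
    then have "v p = 0" using vD(1) by blast
    then show "w p = 0" using wp PT_out[OF z_PT p] by simp
  next
    show "w hat0 = 0" using wp vD PT_hat0[OF z_PT] by simp
  next
    show "w (hat1 \<tau>) = 1" using wp vD PT_hat1[OF z_PT] by simp
  next
    fix p assume p: "p \<in> CS"
    show "0 \<le> w p"
    proof (cases "p = hat0")
      case True then show ?thesis using wp vD PT_hat0[OF z_PT] by simp
    next
      case False
      then have "(\<lambda>x. x p) \<in> GG" using p unfolding GG_def G1_def by auto
      from hpos[OF this] show ?thesis by simp
    qed
  next
    fix a b assume ab: "a \<in> OS" "b \<in> OS" "covers ple PP a b"
    then have f: "fst b = Suc (fst a)" by (simp add: covers_iff)
    show "w a \<le> w b"
    proof (cases "(a,b) \<in> EE")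
      case True then show ?thesis using wp vD ztight by simp
    next
      case False
      then have "(\<lambda>x. x b - x a) \<in> GG" using ab f unfolding GG_def G2_def
        by (auto intro!: image_eqI[where x="(a,b)"])
      from hpos[OF this] show ?thesis by simp
    qed
  next
    fix ps q assume h: "(\<forall>i\<in>{1..k}. ps i \<in> Y \<tau> i) \<and> q \<in> Y \<tau> (Suc k)"
    then have "(\<lambda>x. x q - (\<Sum>i=1..k. x (ps i))) \<in> GG" unfolding GG_def using G3_eq by blast
    from hpos[OF this] show "(\<Sum>i=1..k. w (ps i)) \<le> w q" by simp
  qed
  moreover have "\<forall>a b. (a,b) \<in> EE \<longrightarrow> w a = w b" using wp vD ztight by simp
  ultimately show ?thesis using e_pos unfolding GS_def w_def by auto
qed

lemma GS_F: "GS \<subseteq> F"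
proof
  fix g assume g: "g \<in> GS"
  show "g \<in> F"
  proof (cases "g = z")
    case True then show ?thesis using z_F by simp
  next
    case False
    have gP: "g \<in> PT" and gt: "\<forall>a b. (a,b) \<in> EE \<longrightarrow> g a = g b" using g unfolding GS_def by auto
    have zt: "\<forall>a b. (a,b) \<in> EE \<longrightarrow> z a = z b" using z_GS unfolding GS_def by auto
    have "z - g \<in> V0" using gt zt PT_out[OF z_PT] PT_out[OF gP] PT_hat0[OF z_PT] PT_hat0[OF gP]
      PT_hat1[OF z_PT] PT_hat1[OF gP] unfolding V0_def by auto
    then obtain e where e: "e > 0" "z + e *\<^sub>R (z - g) \<in> GS" using perturb by blast
    define w where "w = z + e *\<^sub>R (z - g)"
    define u where "u = 1 / (1 + e)"
    have u: "0 \<le> u" "u \<le> 1" using e unfolding u_def by auto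
    have "z = (1 - u) *\<^sub>R g + u *\<^sub>R w"
    proof (rule ext)
      fix p
      have ue: "u * (1 + e) = 1" unfolding u_def using e by simp
      have "(1 - u) * g p + u * (z p + e * (z p - g p)) = g p - (u * (1 + e)) * g p + (u * (1 + e)) * z p"
        by (simp add: algebra_simps)
      then have "(1 - u) * g p + u * (z p + e * (z p - g p)) = z p" using ue by simp
      then show "z p = ((1 - u) *\<^sub>R g + u *\<^sub>R w) p" unfolding w_def by simp
    qed
    then have "z \<in> closed_segment g w" unfolding closed_segment_def using u by blast
    moreover have "z \<noteq> w"
    proof
      assume "z = w"
      then have "\<forall>p. e * (z p - g p) = 0" unfolding w_def by (metis add_cancel_left_right plus_fun_apply scaleR_fun_apply minus_apply)
      then have "z = g" using e by (auto simp: fun_eq_iff)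
      then show False using False by simp
    qed
    ultimately have "z \<in> open_segment g w" unfolding open_segment_def using False by auto
    moreover have "g \<in> PT" "w \<in> PT" using g e unfolding GS_def w_def by auto
    ultimately show ?thesis using face_ofD[OF face] z_F by blast
  qed
qed

lemma F_eq: "F = GS" using F_GS GS_F by auto

lemma PP_CO: "p \<in> PP \<longleftrightarrow> p \<in> CS \<or> p \<in> OS"
  by (auto simp: C_iff O_iff)

lemma cmp_ne: "a \<in> OS \<Longrightarrow> cmp a \<noteq> {}" using cmp_self[of a] by auto

lemma pi_cases: "B \<in> \<pi> \<Longrightarrow> (\<exists>a\<in>OS. B = cmp a) \<or> (\<exists>c\<in>CS. B = {c})"
  unfolding pi_def' by auto

lemma phi_sub: "B \<in> \<phi> \<Longrightarrow> B \<subseteq> OS" unfolding phi_def' using cmp_sub by auto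

lemma pi_ne: "B \<in> \<pi> \<Longrightarrow> B \<noteq> {}" using pi_cases cmp_ne by blast

lemma pi_PP: "B \<in> \<pi> \<Longrightarrow> B \<subseteq> PP" using pi_cases cmp_sub PP_CO by blast

lemma phi_pi: "\<phi> \<subseteq> \<pi>" unfolding pi_part_def by auto
lemma Cpi_pi: "Cpi \<subseteq> \<pi>" unfolding pi_part_def by auto

lemma phi_Cpi: "B \<in> \<phi> \<Longrightarrow> B \<in> Cpi \<Longrightarrow> False"
proof -
  assume "B \<in> \<phi>" "B \<in> Cpi"
  then obtain c where "c \<in> CS" "B = {c}" "c \<in> OS" using phi_sub by auto
  then show False using CO_disj[of c] by simp
qed

lemma pi_disj: "B \<in> \<pi> \<Longrightarrow> B' \<in> \<pi> \<Longrightarrow> p \<in> B \<Longrightarrow> p \<in> B' \<Longrightarrow> B = B'"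
proof -
  assume B: "B \<in> \<pi>" and B': "B' \<in> \<pi>" and p: "p \<in> B" "p \<in> B'"
  have cO: "p \<in> cmp a \<Longrightarrow> p \<in> OS" for a by (simp add: cmp_mem)
  show ?thesis
  proof (cases "\<exists>a\<in>OS. B = cmp a")
    case True
    then obtain a where a: "B = cmp a" by blast
    then have pO: "p \<in> OS" using p cO by simp
    show ?thesis
    proof (cases "\<exists>a\<in>OS. B' = cmp a")
      case True
      then obtain a' where a': "B' = cmp a'" by blast
      have "(a,p) \<in> RR" "(a',p) \<in> RR" using p a a' by (auto simp: cmp_mem)
      then have "cmp a = cmp p" "cmp a' = cmp p" using cmp_eq by auto
      then show ?thesis using a a' by simp
    next
      case False
      then obtain c where "c \<in> CS" "B' = {c}" using pi_cases[OF B'] by blast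
      then show ?thesis using p pO CO_disj[of p] by auto
    qed
  next
    case False
    then obtain c where c: "c \<in> CS" "B = {c}" using pi_cases[OF B] by blast
    then have pc: "p = c" "p \<in> CS" using p by auto
    show ?thesis
    proof (cases "\<exists>a\<in>OS. B' = cmp a")
      case True
      then obtain a' where a': "B' = cmp a'" by blast
      then show ?thesis using p cO pc CO_disj[of p] by blast
    next
      case False
      then obtain c' where "c' \<in> CS" "B' = {c'}" using pi_cases[OF B'] by blast
      then show ?thesis using p c by auto
    qed
  qed
qed

lemma block_of_eq: "B \<in> \<pi> \<Longrightarrow> p \<in> B \<Longrightarrow> block_of \<pi> p = B"
proof -
  assume B: "B \<in> \<pi>" and p: "p \<in> B"
  show ?thesis unfolding block_of_def
  proof (rule the_equality)
    show "B \<in> \<pi> \<and> p \<in> B" using B p by simp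
  next
    fix B' assume "B' \<in> \<pi> \<and> p \<in> B'"
    then show "B' = B" using pi_disj[OF _ B _ p] by blast
  qed
qed

lemma block_of_C: "p \<in> CS \<Longrightarrow> block_of \<pi> p = {p}"
  using Cpi_pi by (intro block_of_eq) auto

lemma block_of_O: "p \<in> OS \<Longrightarrow> block_of \<pi> p = cmp p"
  using phi_pi cmp_self by (intro block_of_eq) (auto simp: phi_def')

lemma block_of_in: "p \<in> PP \<Longrightarrow> block_of \<pi> p \<in> \<pi> \<and> p \<in> block_of \<pi> p"
proof -
  assume p: "p \<in> PP"
  show ?thesis
  proof (cases "p \<in> CS")
    case True then show ?thesis using block_of_C[OF True] Cpi_pi by auto
  next
    case False
    then have pO: "p \<in> OS" using p PP_CO by blast
    have "cmp p \<in> \<pi>" using phi_pi pO unfolding phi_def' by auto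
    then show ?thesis using block_of_O[OF pO] cmp_self[OF pO] by simp
  qed
qed

lemma F_const: "x \<in> F \<Longrightarrow> B \<in> \<pi> \<Longrightarrow> p \<in> B \<Longrightarrow> q \<in> B \<Longrightarrow> x p = x q"
proof -
  assume x: "x \<in> F" and B: "B \<in> \<pi>" and pq: "p \<in> B" "q \<in> B"
  { fix a assume "B = cmp a"
    then have "(a,p) \<in> RR" "(a,q) \<in> RR" using pq by (auto simp: cmp_mem)
    then have ?thesis using RR_val[of a p x] RR_val[of a q x] x by simp }
  moreover
  { fix c assume "B = {c}"
    then have ?thesis using pq by simp }
  ultimately show ?thesis using pi_cases[OF B] by blast
qed

definition "fpot p = (if p \<in> CS then real (fst p) - real k - 1 else z p)"

lemma fpot_const: "B \<in> \<pi> \<Longrightarrow> p \<in> B \<Longrightarrow> q \<in> B \<Longrightarrow> fpot p = fpot q"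
proof -
  assume B: "B \<in> \<pi>" and pq: "p \<in> B" "q \<in> B"
  { fix a assume a: "a \<in> OS" "B = cmp a"
    then have "p \<in> OS" "q \<in> OS" using pq by (auto simp: cmp_mem)
    then have "p \<notin> CS" "q \<notin> CS" using CO_disj[of p] CO_disj[of q] by auto
    then have ?thesis unfolding fpot_def using F_const[OF z_F B pq] by simp }
  moreover
  { fix c assume "B = {c}"
    then have ?thesis using pq by simp }
  ultimately show ?thesis using pi_cases[OF B] by blast
qed

lemma br_step: "(B,B') \<in> block_rel ple \<pi> \<Longrightarrow> B = B' \<or> (\<forall>p\<in>B. \<forall>q\<in>B'. fpot p < fpot q)"
proof -
  assume "(B,B') \<in> block_rel ple \<pi>"
  then obtain p q where B: "B \<in> \<pi>" "B' \<in> \<pi>" and pq: "p \<in> B" "q \<in> B'" "ple p q"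
    unfolding block_rel_def by auto
  have pP: "p \<in> PP" "q \<in> PP" using pi_PP B pq by auto
  have "B = B' \<or> fpot p < fpot q"
  proof (cases "p = q")
    case True then show ?thesis using pi_disj B pq by auto
  next
    case False
    then have lt: "fst p < fst q" using pq by (simp add: ple_def)
    show ?thesis
    proof (cases "p \<in> CS")
      case pC: True
      show ?thesis
      proof (cases "q \<in> CS")
        case True then show ?thesis using pC lt unfolding fpot_def by simp
      next
        case False
        then have "q \<in> OS" using pP PP_CO by auto
        then have "0 \<le> z q" using PT_O_nonneg[OF z_PT] by simp
        then show ?thesis using pC False lt unfolding fpot_def by (simp add: C_iff)
      qed
    next
      case pnC: False
      then have pO: "p \<in> OS" using pP PP_CO by auto
      then have qO: "q \<in> OS" using lt pP by (auto simp: O_iff)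
      then have qnC: "q \<notin> CS" using CO_disj[of q] by auto
      have le: "z p \<le> z q" using PT_mono[OF z_PT pO qO lt] .
      show ?thesis
      proof (cases "z p = z q")
        case True
        then have "(p,q) \<in> RR" using z_chainR pO qO lt by blast
        then have "cmp p = cmp q" by (rule cmp_eq)
        then have "block_of \<pi> p = block_of \<pi> q" using block_of_O pO qO by simp
        then show ?thesis using block_of_eq B pq by metis
      next
        case False then show ?thesis using le pnC qnC unfolding fpot_def by simp
      qed
    qed
  qed
  then show ?thesis using fpot_const B pq by metis
qed

lemma br_sub: "block_rel ple \<pi> \<subseteq> \<pi> \<times> \<pi>" unfolding block_rel_def by auto

lemma qle_pi: "quot_le ple \<pi> B B' \<Longrightarrow> B \<in> \<pi> \<and> B' \<in> \<pi>"
  unfolding quot_le_def using trancl_subset_Sigma[OF br_sub] by auto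

lemma qle_strict: "quot_le ple \<pi> B B' \<Longrightarrow> B = B' \<or> (\<forall>p\<in>B. \<forall>q\<in>B'. fpot p < fpot q)"
  unfolding quot_le_def
proof (induction rule: trancl_induct)
  case (base y) then show ?case by (rule br_step)
next
  case (step y w)
  have "y \<in> \<pi>" using step.hyps(2) br_sub by auto
  then obtain m where m: "m \<in> y" using pi_ne by blast
  show ?case
  proof (cases "B = y")
    case True then show ?thesis using br_step[OF step.hyps(2)] by simp
  next
    case False
    then have s1: "\<forall>p\<in>B. \<forall>q\<in>y. fpot p < fpot q" using step.IH by simp
    show ?thesis
    proof (cases "y = w")
      case True then show ?thesis using s1 by simp
    next
      case False
      then have s2: "\<forall>p\<in>y. \<forall>q\<in>w. fpot p < fpot q" using br_step[OF step.hyps(2)] by simp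
      have "\<forall>p\<in>B. \<forall>q\<in>w. fpot p < fpot q"
      proof (intro ballI)
        fix p q assume "p \<in> B" "q \<in> w"
        then have "fpot p < fpot m" "fpot m < fpot q" using s1 s2 m by auto
        then show "fpot p < fpot q" by simp
      qed
      then show ?thesis by simp
    qed
  qed
qed

lemma compat: "compatible ple \<pi>"
  unfolding compatible_def
proof (rule antisymI)
  fix B B' assume h: "(B, B') \<in> (block_rel ple \<pi>)\<^sup>+" "(B', B) \<in> (block_rel ple \<pi>)\<^sup>+"
  then have q: "quot_le ple \<pi> B B'" "quot_le ple \<pi> B' B" unfolding quot_le_def by auto
  obtain p q where pq: "p \<in> B" "q \<in> B'" using qle_pi[OF q(1)] pi_ne by blast
  show "B = B'"
  proof (rule ccontr)
    assume "B \<noteq> B'"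
    then have "fpot p < fpot q" "fpot q < fpot p"
      using qle_strict[OF q(1)] qle_strict[OF q(2)] pq by auto
    then show False by simp
  qed
qed

lemma qle_trans: "quot_le ple \<pi> A B \<Longrightarrow> quot_le ple \<pi> B C \<Longrightarrow> quot_le ple \<pi> A C"
  unfolding quot_le_def by (rule trancl_trans)

lemma qle_antisym: "quot_le ple \<pi> A B \<Longrightarrow> quot_le ple \<pi> B A \<Longrightarrow> A = B"
  using compat unfolding compatible_def antisym_def quot_le_def by blast

lemma qle_I: "B \<in> \<pi> \<Longrightarrow> B' \<in> \<pi> \<Longrightarrow> p \<in> B \<Longrightarrow> q \<in> B' \<Longrightarrow> ple p q \<Longrightarrow> quot_le ple \<pi> B B'"
  unfolding quot_le_def block_rel_def by (rule r_into_trancl) auto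

lemma qle_refl: "B \<in> \<pi> \<Longrightarrow> quot_le ple \<pi> B B"
proof -
  assume B: "B \<in> \<pi>"
  then obtain p where "p \<in> B" using pi_ne by blast
  then show ?thesis using qle_I[OF B B, of p p] by simp
qed

lemma hat0_block: "{hat0} \<in> \<pi>" using hat0_C Cpi_pi by auto

lemma T_eq: "top_block \<tau> k F = cmp (hat1 \<tau>)"
  unfolding top_block_def using block_of_O hat1_O by simp

lemma T_phi: "top_block \<tau> k F \<in> \<phi>" unfolding T_eq phi_def' using hat1_O by simp

lemma hat1_T: "hat1 \<tau> \<in> top_block \<tau> k F" unfolding T_eq using cmp_self hat1_O by simp

lemma qle_bot: "B \<in> \<pi> \<Longrightarrow> quot_le ple \<pi> {hat0} B"
proof -
  assume B: "B \<in> \<pi>"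
  then obtain p where p: "p \<in> B" using pi_ne by blast
  then have "p \<in> PP" using pi_PP[OF B] by blast
  then have "ple hat0 p" by (rule hat0_le)
  then show ?thesis using qle_I[OF hat0_block B, of hat0 p] p by simp
qed

lemma qle_top: "B \<in> \<pi> \<Longrightarrow> quot_le ple \<pi> B (top_block \<tau> k F)"
proof -
  assume B: "B \<in> \<pi>"
  then obtain p where p: "p \<in> B" using pi_ne by blast
  then have "p \<in> PP" using pi_PP[OF B] by blast
  then have "ple p (hat1 \<tau>)" by (rule le_hat1)
  moreover have "top_block \<tau> k F \<in> \<pi>" using T_phi phi_pi by blast
  ultimately show ?thesis using qle_I[OF B, of "top_block \<tau> k F" p "hat1 \<tau>"] p hat1_T by simp
qed

lemma pi_O_phi: "y \<in> \<pi> \<Longrightarrow> q \<in> y \<Longrightarrow> q \<in> OS \<Longrightarrow> y \<in> \<phi>"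
proof -
  assume y: "y \<in> \<pi>" and q: "q \<in> y" "q \<in> OS"
  { fix c assume "c \<in> CS" "y = {c}"
    then have False using q CO_disj[of q] by simp }
  then show ?thesis using pi_cases[OF y] unfolding phi_def' by blast
qed

lemma qle_up: "quot_le ple \<pi> A B \<Longrightarrow> A \<in> \<phi> \<Longrightarrow> B \<in> \<phi>"
  unfolding quot_le_def
proof (induction rule: trancl_induct)
  case (base y)
  then obtain p q where "y \<in> \<pi>" "p \<in> A" "q \<in> y" "ple p q" unfolding block_rel_def by auto
  moreover have "p \<in> OS" using base.prems \<open>p \<in> A\<close> phi_sub by auto
  ultimately have "q \<in> OS" "q \<in> y" using pi_PP by (auto simp: ple_def O_iff)
  then show ?case using \<open>y \<in> \<pi>\<close> pi_O_phi by blast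
next
  case (step y w)
  then obtain p q where "w \<in> \<pi>" "p \<in> y" "q \<in> w" "ple p q" unfolding block_rel_def by auto
  moreover have "p \<in> OS" using step \<open>p \<in> y\<close> phi_sub by auto
  ultimately have "q \<in> OS" "q \<in> w" using pi_PP by (auto simp: ple_def O_iff)
  then show ?case using \<open>w \<in> \<pi>\<close> pi_O_phi by blast
qed

lemma blk_C: "y \<in> \<pi> \<Longrightarrow> p \<in> y \<Longrightarrow> p \<in> CS \<Longrightarrow> y = {p}"
proof -
  assume "y \<in> \<pi>" "p \<in> y" "p \<in> CS"
  moreover have "{p} \<in> \<pi>" using \<open>p \<in> CS\<close> Cpi_pi by auto
  ultimately show ?thesis using pi_disj[of y "{p}" p] by simp
qed

lemma ple_C: "p \<in> PP \<Longrightarrow> ple p c \<Longrightarrow> c \<in> CS \<Longrightarrow> p \<in> CS"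
  unfolding ple_def C_iff by auto

lemma br_C: "(y, {c}) \<in> block_rel ple \<pi> \<Longrightarrow> c \<in> CS \<Longrightarrow> \<exists>p\<in>CS. y = {p} \<and> ple p c"
proof -
  assume yc: "(y, {c}) \<in> block_rel ple \<pi>" and c: "c \<in> CS"
  then have y: "y \<in> \<pi>" and "\<exists>p\<in>y. ple p c" unfolding block_rel_def by auto
  then obtain p where p: "p \<in> y" "ple p c" by blast
  have "p \<in> PP" using pi_PP[OF y] p(1) by blast
  then have pC: "p \<in> CS" using ple_C p(2) c by blast
  then show ?thesis using blk_C[OF y p(1) pC] p(2) by blast
qed

lemma qle_C_aux: "(B, D) \<in> (block_rel ple \<pi>)\<^sup>+ \<Longrightarrow> \<forall>c\<in>CS. D = {c} \<longrightarrow> (\<exists>c'\<in>CS. B = {c'} \<and> ple c' c)"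
proof (induction rule: converse_trancl_induct)
  case (base y)
  show ?case
  proof (intro ballI impI)
    fix c assume "c \<in> CS" "D = {c}"
    then show "\<exists>c'\<in>CS. y = {c'} \<and> ple c' c" using br_C base by blast
  qed
next
  case (step y w)
  show ?case
  proof (intro ballI impI)
    fix c assume c: "c \<in> CS" "D = {c}"
    then obtain c' where c': "c' \<in> CS" "w = {c'}" "ple c' c" using step.IH by blast
    then obtain p where "p \<in> CS" "y = {p}" "ple p c'" using br_C step.hyps(1) by blast
    then show "\<exists>c'\<in>CS. y = {c'} \<and> ple c' c" using c' ple_trans by blast
  qed
qed

lemma qle_C: "quot_le ple \<pi> B {c} \<Longrightarrow> c \<in> CS \<Longrightarrow> \<exists>c'\<in>CS. B = {c'} \<and> ple c' c"
  unfolding quot_le_def using qle_C_aux by blast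

abbreviation "qcov \<equiv> covers (quot_le ple \<pi>) \<pi>"
abbreviation "TT \<equiv> top_block \<tau> k F"
abbreviation "QQ \<equiv> quot_polytope \<tau> k F"
abbreviation "lift \<equiv> lift_map \<tau> k F"

lemma Q_iff: "y \<in> QQ \<longleftrightarrow> (\<forall>B. B \<notin> \<pi> \<longrightarrow> y B = 0) \<and> y {hat0} = 0 \<and> y TT = 1 \<and>
   (\<forall>B\<in>Cpi. 0 \<le> y B) \<and> (\<forall>B\<in>\<phi>. \<forall>B'\<in>\<phi>. qcov B B' \<longrightarrow> y B \<le> y B') \<and>
   (\<forall>Bs A. set Bs \<subseteq> Cpi \<and> A \<in> \<phi> \<and>
        (\<forall>i. Suc i < length ({hat0} # Bs @ [A]) \<longrightarrow>
            qcov (({hat0} # Bs @ [A]) ! i) (({hat0} # Bs @ [A]) ! Suc i))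
      \<longrightarrow> sum_list (map y Bs) \<le> y A)"
  unfolding quot_polytope_def Let_def mem_Collect_eq by (rule refl)

lemma lift_apply: "lift y p = (if p \<in> PP then y (block_of \<pi> p) else 0)"
  unfolding lift_map_def by simp

lemma lift_linear: "linear lift"
proof (rule linearI)
  fix b1 b2 :: "(nat \<times> nat) set \<Rightarrow> real"
  show "lift (b1 + b2) = lift b1 + lift b2" by (rule ext) (simp add: lift_apply)
next
  fix r and b :: "(nat \<times> nat) set \<Rightarrow> real"
  show "lift (r *\<^sub>R b) = r *\<^sub>R lift b" by (rule ext) (simp add: lift_apply)
qed

lemma phi_fin: "finite \<phi>" unfolding phi_def' using OS_fin by simp
lemma pi_fin: "finite \<pi>" unfolding pi_def' using OS_fin CS_fin by simp

lemma covers_phi_pi: "covers (quot_le ple \<pi>) \<phi> A B \<Longrightarrow> qcov A B"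
proof -
  assume c: "covers (quot_le ple \<pi>) \<phi> A B"
  then have AB: "A \<in> \<phi>" "B \<in> \<phi>" "quot_le ple \<pi> A B" "A \<noteq> B"
    and no: "\<not> (\<exists>c\<in>\<phi>. quot_le ple \<pi> A c \<and> quot_le ple \<pi> c B \<and> c \<noteq> A \<and> c \<noteq> B)"
    unfolding covers_def by auto
  have "\<not> (\<exists>c\<in>\<pi>. quot_le ple \<pi> A c \<and> quot_le ple \<pi> c B \<and> c \<noteq> A \<and> c \<noteq> B)"
    using no qle_up AB(1) by blast
  then show ?thesis using AB phi_pi unfolding covers_def by blast
qed

lemma phi_mono_Q: "y \<in> QQ \<Longrightarrow> A \<in> \<phi> \<Longrightarrow> B \<in> \<phi> \<Longrightarrow> quot_le ple \<pi> A B \<Longrightarrow> y A \<le> y B"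
proof -
  assume y: "y \<in> QQ" and AB: "A \<in> \<phi>" "B \<in> \<phi>" "quot_le ple \<pi> A B"
  have yc: "\<forall>B\<in>\<phi>. \<forall>B'\<in>\<phi>. qcov B B' \<longrightarrow> y B \<le> y B'" using y unfolding Q_iff by blast
  show ?thesis
  proof (rule cover_mono[of \<phi> "quot_le ple \<pi>" y])
    show "finite \<phi>" by (rule phi_fin)
    show "\<forall>a\<in>\<phi>. quot_le ple \<pi> a a" using qle_refl phi_pi by blast
    show "\<forall>a\<in>\<phi>. \<forall>b\<in>\<phi>. \<forall>c\<in>\<phi>. quot_le ple \<pi> a b \<longrightarrow> quot_le ple \<pi> b c \<longrightarrow> quot_le ple \<pi> a c"
      using qle_trans by blast
    show "\<forall>a\<in>\<phi>. \<forall>b\<in>\<phi>. quot_le ple \<pi> a b \<longrightarrow> quot_le ple \<pi> b a \<longrightarrow> a = b"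
      using qle_antisym by blast
    show "\<forall>a\<in>\<phi>. \<forall>b\<in>\<phi>. covers (quot_le ple \<pi>) \<phi> a b \<longrightarrow> y a \<le> y b"
      using yc covers_phi_pi by blast
  qed (use AB in auto)
qed

lemma cov_CC: "c \<in> CS \<Longrightarrow> d \<in> CS \<Longrightarrow> fst d = Suc (fst c) \<Longrightarrow> qcov {c} {d}"
proof -
  assume c: "c \<in> CS" and d: "d \<in> CS" and f: "fst d = Suc (fst c)"
  have pi: "{c} \<in> \<pi>" "{d} \<in> \<pi>" using c d Cpi_pi by auto
  have le: "quot_le ple \<pi> {c} {d}" using qle_I[OF pi, of c d] f by (simp add: ple_def)
  have ne: "{c} \<noteq> {d}" using f by auto
  have "\<not> (\<exists>E\<in>\<pi>. quot_le ple \<pi> {c} E \<and> quot_le ple \<pi> E {d} \<and> E \<noteq> {c} \<and> E \<noteq> {d})"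
  proof
    assume "\<exists>E\<in>\<pi>. quot_le ple \<pi> {c} E \<and> quot_le ple \<pi> E {d} \<and> E \<noteq> {c} \<and> E \<noteq> {d}"
    then obtain E where E: "quot_le ple \<pi> {c} E" "quot_le ple \<pi> E {d}" "E \<noteq> {c}" "E \<noteq> {d}" by blast
    obtain e where e: "e \<in> CS" "E = {e}" "ple e d" using qle_C[OF E(2) d] by blast
    obtain c' where c': "c' \<in> CS" "{c} = {c'}" "ple c' e" using qle_C[OF E(1)[unfolded e(2)] e(1)] by blast
    have "fst c < fst e" "fst e < fst d" using e c' E(3,4) by (auto simp: ple_def)
    then show False using f by simp
  qed
  then show ?thesis using pi le ne unfolding covers_def by blast
qed

lemma cov_CC_inv: "c \<in> CS \<Longrightarrow> d \<in> CS \<Longrightarrow> qcov {c} {d} \<Longrightarrow> fst d = Suc (fst c)"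
proof -
  assume c: "c \<in> CS" and d: "d \<in> CS" and cv: "qcov {c} {d}"
  then have le: "quot_le ple \<pi> {c} {d}" and ne: "c \<noteq> d"
    and no: "\<not> (\<exists>E\<in>\<pi>. quot_le ple \<pi> {c} E \<and> quot_le ple \<pi> E {d} \<and> E \<noteq> {c} \<and> E \<noteq> {d})"
    unfolding covers_def by auto
  obtain c' where "c' \<in> CS" "{c} = {c'}" "ple c' d" using qle_C[OF le d] by blast
  then have lt: "fst c < fst d" using ne by (auto simp: ple_def)
  show ?thesis
  proof (rule ccontr)
    assume "fst d \<noteq> Suc (fst c)"
    then have lt2: "Suc (fst c) < fst d" using lt by simp
    define e where "e = (Suc (fst c), 1::nat)"
    have "fst d \<le> k" using d by (simp add: C_iff)
    then have "Suc (fst c) \<le> Suc L" using lt2 k by simp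
    then have "e \<in> PP" unfolding e_def by (rule e_PP)
    then have eC: "e \<in> CS" unfolding C_iff using lt2 \<open>fst d \<le> k\<close> by (simp add: e_def)
    have pi: "{c} \<in> \<pi>" "{d} \<in> \<pi>" "{e} \<in> \<pi>" using c d eC Cpi_pi by auto
    have "quot_le ple \<pi> {c} {e}" using qle_I[OF pi(1) pi(3), of c e] by (simp add: ple_def e_def)
    moreover have "quot_le ple \<pi> {e} {d}" using qle_I[OF pi(3) pi(2), of e d] lt2 by (simp add: ple_def e_def)
    moreover have "{e} \<noteq> {c}" "{e} \<noteq> {d}" using lt2 by (auto simp: e_def prod_eq_iff)
    ultimately show False using no pi(3) by blast
  qed
qed

lemma lift_C: "p \<in> CS \<Longrightarrow> lift y p = y {p}"
  using block_of_C[of p] by (simp add: lift_apply C_iff)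

lemma lift_O: "p \<in> OS \<Longrightarrow> lift y p = y (cmp p)"
  using block_of_O[of p] by (simp add: lift_apply O_iff)

lemma cmp_phi: "a \<in> OS \<Longrightarrow> cmp a \<in> \<phi>" unfolding phi_def' by simp

lemma Y_CS: "i \<le> k \<Longrightarrow> p \<in> Y \<tau> i \<Longrightarrow> p \<in> CS"
  using k by (auto simp: C_iff mem_Phat Y_fst)

lemma Y_OS: "k < i \<Longrightarrow> i \<le> Suc L \<Longrightarrow> p \<in> Y \<tau> i \<Longrightarrow> p \<in> OS"
  by (auto simp: O_iff mem_Phat Y_fst)

lemma lift_chain:
  assumes y: "y \<in> QQ" and ps: "\<forall>i\<in>{1..k}. ps i \<in> Y \<tau> i" and q: "q \<in> Y \<tau> (Suc k)"
  shows "(\<Sum>i=1..k. lift y (ps i)) \<le> lift y q"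
proof -
  define p where "p i = (if i = 0 then hat0 else ps i)" for i
  have pY: "i \<le> k \<Longrightarrow> p i \<in> Y \<tau> i" for i
    using ps by (cases "i = 0") (auto simp: p_def hat0_def Y_def)
  have pC: "i \<le> k \<Longrightarrow> p i \<in> CS" for i using pY Y_CS by blast
  have pf: "i \<le> k \<Longrightarrow> fst (p i) = i" for i using pY Y_fst by blast
  have qO: "q \<in> OS" using Y_OS[OF _ _ q] k by simp
  have fq: "fst q = Suc k" using q Y_fst by blast
  define A where "A = cmp q"
  have A: "A \<in> \<phi>" "q \<in> A" unfolding A_def using cmp_phi cmp_self qO by auto
  define c0 where "c0 = p k"
  have c0: "c0 \<in> CS" "{c0} \<in> \<pi>" "fst c0 = k" unfolding c0_def using pC pf Cpi_pi by auto
  have "quot_le ple \<pi> {c0} A" using qle_I[OF c0(2), of A c0 q] A phi_pi c0(3) fq by (auto simp: ple_def)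
  moreover have "{c0} \<noteq> A" using phi_Cpi[of A] A c0 by auto
  moreover have "A \<in> \<pi>" using A phi_pi by blast
  ultimately have "\<exists>c\<in>\<pi>. qcov {c0} c \<and> quot_le ple \<pi> c A"
    using cover_exists[where S="\<pi>" and le="quot_le ple \<pi>" and a="{c0}" and b=A, OF pi_fin _ _ _ c0(2)]
      qle_refl qle_trans qle_antisym by blast
  then obtain A' where A': "A' \<in> \<pi>" "qcov {c0} A'" "quot_le ple \<pi> A' A" by blast
  have A'phi: "A' \<in> \<phi>"
  proof -
    { fix d assume d: "d \<in> CS" "A' = {d}"
      then have "fst d = Suc k" using cov_CC_inv[OF c0(1) d(1)] A'(2) c0(3) by simp
      then have False using d(1) by (simp add: C_iff) }
    then show ?thesis using pi_cases[OF A'(1)] unfolding phi_def' by blast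
  qed
  define Bs where "Bs = map (\<lambda>i. {p i}) [1..<Suc k]"
  define LL where "LL = {hat0} # Bs @ [A']"
  have LL': "LL = map (\<lambda>i. {p i}) [0..<Suc k] @ [A']"
    unfolding LL_def Bs_def by (simp add: upt_conv_Cons p_def)
  have len: "length LL = Suc (Suc k)" unfolding LL' by simp
  have nth1: "i < Suc k \<Longrightarrow> LL ! i = {p i}" for i unfolding LL' by (auto simp: nth_append less_Suc_eq)
  have nth2: "LL ! Suc k = A'" unfolding LL' by (simp add: nth_append)
  have cov: "\<forall>i. Suc i < length LL \<longrightarrow> qcov (LL ! i) (LL ! Suc i)"
  proof (intro allI impI)
    fix i assume "Suc i < length LL"
    then have i: "i \<le> k" using len by simp
    show "qcov (LL ! i) (LL ! Suc i)"
    proof (cases "i = k")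
      case True then show ?thesis using nth1[of k] nth2 A'(2) by (simp add: c0_def)
    next
      case False
      then have "i < k" using i by simp
      then show ?thesis using nth1[of i] nth1[of "Suc i"] cov_CC[OF pC[of i] pC[of "Suc i"]] pf[of i] pf[of "Suc i"]
        by simp
    qed
  qed
  have setBs: "set Bs \<subseteq> Cpi" unfolding Bs_def using pC by auto
  have chain: "\<forall>Bs A. set Bs \<subseteq> Cpi \<and> A \<in> \<phi> \<and>
        (\<forall>i. Suc i < length ({hat0} # Bs @ [A]) \<longrightarrow>
            qcov (({hat0} # Bs @ [A]) ! i) (({hat0} # Bs @ [A]) ! Suc i))
      \<longrightarrow> sum_list (map y Bs) \<le> y A" using y unfolding Q_iff by blast
  have "sum_list (map y Bs) \<le> y A'"
    using chain[rule_format, OF conjI[OF setBs conjI[OF A'phi cov[unfolded LL_def]]]] .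
  moreover have "sum_list (map y Bs) = (\<Sum>i=1..k. lift y (ps i))"
  proof -
    have "sum_list (map y Bs) = sum (\<lambda>i. y {p i}) (set [1..<Suc k])"
      unfolding Bs_def map_map comp_def by (rule interv_sum_list_conv_sum_set_nat)
    also have "\<dots> = (\<Sum>i=1..k. lift y (ps i))"
    proof (rule sum.cong)
      show "set [1..<Suc k] = {1..k}" by auto
    next
      fix i assume "i \<in> {1..k}"
      then show "y {p i} = lift y (ps i)" using lift_C[OF pC[of i]] by (simp add: p_def)
    qed
    finally show ?thesis .
  qed
  moreover have "y A' \<le> y A" using phi_mono_Q[OF y A'phi A(1) A'(3)] .
  moreover have "y A = lift y q" using lift_O[OF qO] by (simp add: A_def)
  ultimately show ?thesis by simp
qed

lemma lift_GS: "y \<in> QQ \<Longrightarrow> lift y \<in> GS"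
proof -
  assume y: "y \<in> QQ"
  have yD: "y {hat0} = 0" "y TT = 1" "\<forall>B\<in>Cpi. 0 \<le> y B" using y unfolding Q_iff by auto
  have "lift y \<in> PT"
    unfolding chain_order_polytope_def mem_Collect_eq
  proof (intro conjI allI ballI impI)
    fix p assume "p \<notin> PP" then show "lift y p = 0" by (simp add: lift_apply)
  next
    show "lift y hat0 = 0" using lift_C[OF hat0_C] yD by simp
  next
    show "lift y (hat1 \<tau>) = 1" using yD hat1_PP unfolding top_block_def by (simp add: lift_apply)
  next
    fix p assume "p \<in> CS" then show "0 \<le> lift y p" using lift_C[of p y] yD by simp
  next
    fix a b assume ab: "a \<in> OS" "b \<in> OS" "covers ple PP a b"
    then have f: "fst b = Suc (fst a)" by (simp add: covers_iff)
    have "quot_le ple \<pi> (cmp a) (cmp b)"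
      using qle_I[of "cmp a" "cmp b" a b] cmp_phi[of a] cmp_phi[of b] phi_pi cmp_self[of a] cmp_self[of b] ab f
      by (auto simp: ple_def)
    then have "y (cmp a) \<le> y (cmp b)" using phi_mono_Q[OF y] cmp_phi ab by blast
    then show "lift y a \<le> lift y b" using lift_O ab by simp
  next
    fix ps q assume "(\<forall>i\<in>{1..k}. ps i \<in> Y \<tau> i) \<and> q \<in> Y \<tau> (Suc k)"
    then show "(\<Sum>i=1..k. lift y (ps i)) \<le> lift y q" using lift_chain[OF y] by blast
  qed
  moreover have "\<forall>a b. (a,b) \<in> EE \<longrightarrow> lift y a = lift y b"
  proof (intro allI impI)
    fix a b assume ab: "(a,b) \<in> EE"
    then have "(a,b) \<in> RR" by blast
    then have "cmp a = cmp b" by (rule cmp_eq)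
    moreover have "a \<in> OS" "b \<in> OS" using ab by (auto simp: EE_iff)
    ultimately show "lift y a = lift y b" using lift_O by simp
  qed
  ultimately show ?thesis unfolding GS_def by simp
qed

lemma lift_inj: "inj_on lift QQ"
proof (rule inj_onI)
  fix y1 y2 assume y: "y1 \<in> QQ" "y2 \<in> QQ" and eq: "lift y1 = lift y2"
  show "y1 = y2"
  proof (rule ext)
    fix B
    show "y1 B = y2 B"
    proof (cases "B \<in> \<pi>")
      case True
      then obtain p where p: "p \<in> B" using pi_ne by blast
      then have pP: "p \<in> PP" using pi_PP True by blast
      have "lift y1 p = lift y2 p" using eq by simp
      then show ?thesis using block_of_eq[OF True p] pP by (simp add: lift_apply)
    next
      case False
      then show ?thesis using y unfolding Q_iff by simp
    qed
  qed
qed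

lemma x_mono_q: "x \<in> F \<Longrightarrow> (A,B) \<in> (block_rel ple \<pi>)\<^sup>+ \<Longrightarrow> A \<in> \<phi> \<Longrightarrow> \<forall>p\<in>A. \<forall>q\<in>B. x p \<le> x q"
proof -
  assume x: "x \<in> F" and AB: "(A,B) \<in> (block_rel ple \<pi>)\<^sup>+" and A: "A \<in> \<phi>"
  have xP: "x \<in> PT" using x F_PT by blast
  have stp: "D \<in> \<phi> \<Longrightarrow> (D,E) \<in> block_rel ple \<pi> \<Longrightarrow> \<forall>p\<in>D. \<forall>q\<in>E. x p \<le> x q" for D E
  proof -
    assume D: "D \<in> \<phi>" and DE: "(D,E) \<in> block_rel ple \<pi>"
    then obtain p0 q0 where pq: "E \<in> \<pi>" "p0 \<in> D" "q0 \<in> E" "ple p0 q0" unfolding block_rel_def by auto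
    have p0O: "p0 \<in> OS" using phi_sub D pq(2) by blast
    have "q0 \<in> PP" using pi_PP pq(1) pq(3) by blast
    then have q0O: "q0 \<in> OS" using p0O pq(4) by (auto simp: O_iff ple_def)
    have le: "x p0 \<le> x q0" using PT_mono_le[OF xP p0O q0O pq(4)] .
    show ?thesis
    proof (intro ballI)
      fix p q assume "p \<in> D" "q \<in> E"
      then have "x p = x p0" "x q = x q0" using F_const[OF x] D phi_pi pq by blast+
      then show "x p \<le> x q" using le by simp
    qed
  qed
  from AB A show ?thesis
  proof (induction rule: trancl_induct)
    case (base y) then show ?case using stp by blast
  next
    case (step D E)
    have Dphi: "D \<in> \<phi>" using qle_up[of A D] step.hyps(1) step.prems unfolding quot_le_def by blast
    obtain m where m: "m \<in> D" using Dphi phi_pi pi_ne by blast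
    have s1: "\<forall>p\<in>A. \<forall>q\<in>D. x p \<le> x q" using step.IH step.prems by blast
    have s2: "\<forall>p\<in>D. \<forall>q\<in>E. x p \<le> x q" using stp[OF Dphi step.hyps(2)] .
    show ?case
    proof (intro ballI)
      fix p q assume "p \<in> A" "q \<in> E"
      then have "x p \<le> x m" "x m \<le> x q" using s1 s2 m by auto
      then show "x p \<le> x q" by simp
    qed
  qed
qed

lemma F_chain:
  assumes x: "x \<in> F" and yB: "\<And>B p. B \<in> \<pi> \<Longrightarrow> p \<in> B \<Longrightarrow> y B = x p"
    and setBs: "set Bs \<subseteq> Cpi" and A: "A \<in> \<phi>"
    and cov: "\<forall>i. Suc i < length ({hat0} # Bs @ [A]) \<longrightarrow>
            qcov (({hat0} # Bs @ [A]) ! i) (({hat0} # Bs @ [A]) ! Suc i)"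
  shows "sum_list (map y Bs) \<le> y A"
proof -
  have xP: "x \<in> PT" using x F_PT by blast
  define r where "r = length Bs"
  define LL where "LL = {hat0} # Bs @ [A]"
  have len: "length LL = Suc (Suc r)" unfolding LL_def r_def by simp
  define c where "c i = (if i = 0 then hat0 else the_elem (Bs ! (i - 1)))" for i
  have Bsel: "j < r \<Longrightarrow> \<exists>d\<in>CS. Bs ! j = {d}" for j
  proof -
    assume "j < r"
    then have "Bs ! j \<in> set Bs" unfolding r_def by simp
    then show ?thesis using setBs by auto
  qed
  have cC: "i \<le> r \<Longrightarrow> c i \<in> CS \<and> LL ! i = {c i}" for i
  proof -
    assume i: "i \<le> r"
    show ?thesis
    proof (cases i)
      case 0 then show ?thesis using hat0_C by (simp add: c_def LL_def)
    next
      case (Suc j)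
      then have "j < r" using i by simp
      then obtain d where d: "d \<in> CS" "Bs ! j = {d}" using Bsel by blast
      have "LL ! i = Bs ! j" unfolding LL_def using Suc \<open>j < r\<close> by (simp add: nth_append r_def)
      then show ?thesis using d Suc by (simp add: c_def)
    qed
  qed
  have nthA: "LL ! Suc r = A" unfolding LL_def r_def by (simp add: nth_append)
  have covL: "i \<le> r \<Longrightarrow> qcov (LL ! i) (LL ! Suc i)" for i
    using cov len unfolding LL_def[symmetric] by simp
  have cf: "i \<le> r \<Longrightarrow> fst (c i) = i" for i
  proof (induction i)
    case 0 then show ?case by (simp add: c_def hat0_def)
  next
    case (Suc i)
    then have "qcov {c i} {c (Suc i)}" using covL[of i] cC[of i] cC[of "Suc i"] by simp
    then have "fst (c (Suc i)) = Suc (fst (c i))" using cov_CC_inv cC Suc.prems by simp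
    then show ?case using Suc by simp
  qed
  have rk: "r \<le> k" using cC[of r] cf[of r] by (simp add: C_iff)
  obtain a where a: "a \<in> A" "a \<in> OS" using A phi_sub phi_pi pi_ne by blast
  have "r = k"
  proof (rule ccontr)
    assume "r \<noteq> k"
    then have lt: "r < k" using rk by simp
    define e where "e = (Suc r, 1::nat)"
    have "e \<in> PP" unfolding e_def using lt k by (intro e_PP) simp
    then have eC: "e \<in> CS" unfolding C_iff using lt by (simp add: e_def)
    have pi: "{c r} \<in> \<pi>" "{e} \<in> \<pi>" "A \<in> \<pi>" using cC[of r] eC Cpi_pi A phi_pi by auto
    have cv: "qcov {c r} A" using covL[of r] cC[of r] nthA by simp
    have "quot_le ple \<pi> {c r} {e}" using qle_I[OF pi(1) pi(2), of "c r" e] cf[of r] by (simp add: ple_def e_def)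
    moreover have "quot_le ple \<pi> {e} A" using qle_I[OF pi(2) pi(3), of e a] a lt by (simp add: ple_def e_def O_iff)
    moreover have "{e} \<noteq> {c r}" using cf[of r] by (auto simp: e_def prod_eq_iff)
    moreover have "{e} \<noteq> A" using phi_Cpi[of A] A eC by auto
    ultimately show False using cv pi(2) unfolding covers_def by blast
  qed
  have cY: "\<forall>i\<in>{1..k}. c i \<in> Y \<tau> i"
  proof
    fix i assume i: "i \<in> {1..k}"
    then have "c i \<in> CS" "fst (c i) = i" using cC cf \<open>r = k\<close> by auto
    then show "c i \<in> Y \<tau> i" by (auto simp: C_iff mem_Phat)
  qed
  have sumle: "(\<Sum>i=1..k. x (c i)) \<le> x a"
  proof (cases "fst a = Suc k")
    case True
    then have "a \<in> Y \<tau> (Suc k)" using a(2) by (auto simp: O_iff mem_Phat)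
    then show ?thesis using PT_chain[OF xP cY] by simp
  next
    case False
    define q0 where "q0 = (Suc k, 1::nat)"
    have q0Y: "q0 \<in> Y \<tau> (Suc k)" unfolding q0_def by (rule e_in) (use k in simp)
    then have q0O: "q0 \<in> OS" using Y_OS[OF _ _ q0Y] k by simp
    have "fst q0 < fst a" using False a(2) by (simp add: O_iff q0_def)
    then have "x q0 \<le> x a" using PT_mono[OF xP q0O a(2)] by simp
    then show ?thesis using PT_chain[OF xP cY q0Y] by simp
  qed
  have "sum_list (map y Bs) = (\<Sum>j = 0..<r. y (Bs ! j))"
    unfolding r_def by (simp add: sum_list_sum_nth)
  also have "\<dots> = (\<Sum>j<k. x (c (Suc j)))"
  proof -
    have "(\<Sum>j = 0..<r. y (Bs ! j)) = (\<Sum>j<r. x (c (Suc j)))"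
    proof (rule sum.cong)
      show "{0..<r} = {..<r}" by auto
    next
      fix j assume "j \<in> {..<r}"
      then have "Suc j \<le> r" by simp
      then have "c (Suc j) \<in> CS" "LL ! Suc j = {c (Suc j)}" using cC by auto
      moreover have "LL ! Suc j = Bs ! j" unfolding LL_def using \<open>Suc j \<le> r\<close> by (simp add: nth_append r_def)
      ultimately show "y (Bs ! j) = x (c (Suc j))" using yB[of "{c (Suc j)}" "c (Suc j)"] Cpi_pi by auto
    qed
    then show ?thesis using \<open>r = k\<close> by simp
  qed
  also have "\<dots> = (\<Sum>i=1..k. x (c i))" by (simp add: sum.atLeast1_atMost_eq)
  also have "\<dots> \<le> x a" by (rule sumle)
  also have "x a = y A" using yB[of A a] A phi_pi a by auto
  finally show ?thesis .
qed

lemma F_lift: "x \<in> F \<Longrightarrow> \<exists>y\<in>QQ. lift y = x"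
proof -
  assume x: "x \<in> F"
  have xP: "x \<in> PT" using x F_PT by blast
  define y where "y B = (if B \<in> \<pi> then x (SOME p. p \<in> B) else 0)" for B
  have yB: "B \<in> \<pi> \<Longrightarrow> p \<in> B \<Longrightarrow> y B = x p" for B p
  proof -
    assume B: "B \<in> \<pi>" and p: "p \<in> B"
    have "(SOME p. p \<in> B) \<in> B" using p by (rule someI)
    then show ?thesis using F_const[OF x B _ p] B unfolding y_def by simp
  qed
  have "lift y = x"
  proof (rule ext)
    fix p show "lift y p = x p"
    proof (cases "p \<in> PP")
      case True
      then show ?thesis using block_of_in[OF True] yB by (simp add: lift_apply)
    next
      case False then show ?thesis using PT_out[OF xP False] by (simp add: lift_apply)
    qed
  qed
  moreover have "y \<in> QQ"
    unfolding Q_iff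
  proof (intro conjI allI impI ballI)
    fix B assume "B \<notin> \<pi>" then show "y B = 0" by (simp add: y_def)
  next
    show "y {hat0} = 0" using yB[OF hat0_block, of hat0] PT_hat0[OF xP] by simp
  next
    show "y TT = 1" using yB[OF _ hat1_T] T_phi phi_pi PT_hat1[OF xP] by auto
  next
    fix B assume "B \<in> Cpi"
    then obtain c where "c \<in> CS" "B = {c}" by blast
    moreover have "{c} \<in> \<pi>" using \<open>c \<in> CS\<close> Cpi_pi by blast
    ultimately show "0 \<le> y B" using yB[of B c] PT_C[OF xP, of c] by auto
  next
    fix B B' assume BB: "B \<in> \<phi>" "B' \<in> \<phi>" "qcov B B'"
    then have "(B,B') \<in> (block_rel ple \<pi>)\<^sup>+" unfolding covers_def quot_le_def by blast
    from x_mono_q[OF x this BB(1)] have m: "\<forall>p\<in>B. \<forall>q\<in>B'. x p \<le> x q" .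
    obtain p q where "p \<in> B" "q \<in> B'" using BB phi_pi pi_ne by blast
    moreover have "B \<in> \<pi>" "B' \<in> \<pi>" using BB phi_pi by blast+
    ultimately show "y B \<le> y B'" using m yB[of B p] yB[of B' q] by auto
  next
    fix Bs A assume h: "set Bs \<subseteq> Cpi \<and> A \<in> \<phi> \<and>
        (\<forall>i. Suc i < length ({hat0} # Bs @ [A]) \<longrightarrow>
            qcov (({hat0} # Bs @ [A]) ! i) (({hat0} # Bs @ [A]) ! Suc i))"
    then show "sum_list (map y Bs) \<le> y A" using F_chain[where y=y, OF x yB] by blast
  qed
  ultimately show ?thesis by blast
qed

lemma bij: "bij_betw lift QQ F"
  unfolding bij_betw_def
proof
  show "inj_on lift QQ" by (rule lift_inj)
  show "lift ` QQ = F"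
  proof
    show "lift ` QQ \<subseteq> F" using lift_GS GS_F by blast
    show "F \<subseteq> lift ` QQ" using F_lift by blast
  qed
qed

definition "ind B = (\<lambda>p. if p \<in> B then 1 else 0 :: real)"
definition "Bs0 = \<pi> - {{hat0}, TT}"
definition "DD = {x - y | x y. x \<in> F \<and> y \<in> F}"

lemma V0_RR: "v \<in> V0 \<Longrightarrow> (a,b) \<in> RR \<Longrightarrow> v a = v b"
proof -
  assume v: "v \<in> V0" and ab: "(a,b) \<in> RR"
  have t: "\<And>a b. (a,b) \<in> EE \<Longrightarrow> v a = v b" using v unfolding V0_def by blast
  from ab show ?thesis
  proof (induction rule: rtrancl_induct)
    case base then show ?case by simp
  next
    case (step y w) then show ?case using t[of y w] t[of w y] by auto
  qed
qed

lemma V0_const: "v \<in> V0 \<Longrightarrow> B \<in> \<pi> \<Longrightarrow> p \<in> B \<Longrightarrow> q \<in> B \<Longrightarrow> v p = v q"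
proof -
  assume v: "v \<in> V0" and B: "B \<in> \<pi>" and pq: "p \<in> B" "q \<in> B"
  { fix a assume "B = cmp a"
    then have "(a,p) \<in> RR" "(a,q) \<in> RR" using pq by (auto simp: cmp_mem)
    then have ?thesis using V0_RR[OF v, of a p] V0_RR[OF v, of a q] by simp }
  moreover
  { fix c assume "B = {c}"
    then have ?thesis using pq by simp }
  ultimately show ?thesis using pi_cases[OF B] by blast
qed

lemma Bs0_fin: "finite Bs0" unfolding Bs0_def using pi_fin by simp

lemma sum_ind_apply: "p \<in> PP \<Longrightarrow> (\<Sum>B\<in>Bs0. c B *\<^sub>R ind B) p =
   (if block_of \<pi> p \<in> Bs0 then c (block_of \<pi> p) else 0)"
proof -
  assume p: "p \<in> PP"
  define B0 where "B0 = block_of \<pi> p"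
  have B0: "B0 \<in> \<pi>" "p \<in> B0" using block_of_in[OF p] by (auto simp: B0_def)
  have "(\<Sum>B\<in>Bs0. c B *\<^sub>R ind B) p = (\<Sum>B\<in>Bs0. c B * ind B p)" by simp
  also have "\<dots> = (\<Sum>B\<in>Bs0. if B0 = B then c B else 0)"
  proof (rule sum.cong)
    fix B assume "B \<in> Bs0"
    then have B: "B \<in> \<pi>" unfolding Bs0_def by simp
    have "p \<in> B \<longleftrightarrow> B0 = B" using pi_disj[OF B0(1) B B0(2)] B0(2) by auto
    then show "c B * ind B p = (if B0 = B then c B else 0)" unfolding ind_def by auto
  qed simp
  also have "\<dots> = (if B0 \<in> Bs0 then c B0 else 0)" using Bs0_fin by simp
  finally show ?thesis unfolding B0_def .
qed

lemma sum_ind_out: "p \<notin> PP \<Longrightarrow> (\<Sum>B\<in>Bs0. c B *\<^sub>R ind B) p = 0"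
proof -
  assume p: "p \<notin> PP"
  have "ind B p = 0" if "B \<in> Bs0" for B
    using that pi_PP[of B] p unfolding Bs0_def ind_def by auto
  then show ?thesis by simp
qed

lemma V0_span: "v \<in> V0 \<Longrightarrow> v \<in> span (ind ` Bs0)"
proof -
  assume v: "v \<in> V0"
  define c where "c B = v (SOME p. p \<in> B)" for B
  have cB: "B \<in> \<pi> \<Longrightarrow> p \<in> B \<Longrightarrow> c B = v p" for B p
  proof -
    assume B: "B \<in> \<pi>" and p: "p \<in> B"
    have "(SOME p. p \<in> B) \<in> B" using p by (rule someI)
    then show ?thesis using V0_const[OF v B _ p] unfolding c_def by simp
  qed
  have vD: "\<forall>p. p \<notin> PP \<longrightarrow> v p = 0" "v hat0 = 0" "v (hat1 \<tau>) = 0" using v unfolding V0_def by auto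
  have "v = (\<Sum>B\<in>Bs0. c B *\<^sub>R ind B)"
  proof (rule ext)
    fix p
    show "v p = (\<Sum>B\<in>Bs0. c B *\<^sub>R ind B) p"
    proof (cases "p \<in> PP")
      case False
      then have "v p = 0" using vD(1) by blast
      then show ?thesis using sum_ind_out[OF False] by simp
    next
      case True
      define B0 where "B0 = block_of \<pi> p"
      have B0: "B0 \<in> \<pi>" "p \<in> B0" using block_of_in[OF True] by (auto simp: B0_def)
      show ?thesis
      proof (cases "B0 \<in> Bs0")
        case True
        then show ?thesis using sum_ind_apply[OF \<open>p \<in> PP\<close>] cB[OF B0] by (simp add: B0_def)
      next
        case False
        then have "B0 = {hat0} \<or> B0 = TT" using B0(1) unfolding Bs0_def by auto
        then have "v p = 0"
        proof
          assume "B0 = {hat0}" then show ?thesis using B0(2) vD by simp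
        next
          assume "B0 = TT"
          then have "v p = v (hat1 \<tau>)" using V0_const[OF v B0(1) B0(2)] hat1_T by simp
          then show ?thesis using vD by simp
        qed
        then show ?thesis using sum_ind_apply[OF \<open>p \<in> PP\<close>] False by (simp add: B0_def)
      qed
    qed
  qed
  also have "\<dots> \<in> span (ind ` Bs0)"
    by (intro span_sum span_scale span_base) auto
  finally show ?thesis .
qed

lemma DD_V0: "DD \<subseteq> V0"
proof
  fix d assume "d \<in> DD"
  then obtain x w where d: "d = x - w" "x \<in> GS" "w \<in> GS" unfolding DD_def using F_GS by blast
  have xP: "x \<in> PT" "w \<in> PT" using d unfolding GS_def by auto
  have t: "\<forall>a b. (a,b) \<in> EE \<longrightarrow> x a = x b" "\<forall>a b. (a,b) \<in> EE \<longrightarrow> w a = w b" using d unfolding GS_def by auto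
  show "d \<in> V0" unfolding V0_def d(1) using PT_out[OF xP(1)] PT_out[OF xP(2)] PT_hat0[OF xP(1)] PT_hat0[OF xP(2)]
    PT_hat1[OF xP(1)] PT_hat1[OF xP(2)] t by auto
qed

lemma ind_V0: "B \<in> Bs0 \<Longrightarrow> ind B \<in> V0"
proof -
  assume B: "B \<in> Bs0"
  then have Bpi: "B \<in> \<pi>" and nh0: "B \<noteq> {hat0}" and nT: "B \<noteq> TT" unfolding Bs0_def by auto
  have "hat0 \<notin> B" using pi_disj[OF Bpi hat0_block, of hat0] nh0 by auto
  moreover have "hat1 \<tau> \<notin> B" using pi_disj[OF Bpi _ _ hat1_T] T_phi phi_pi nT by auto
  moreover have "p \<notin> PP \<Longrightarrow> p \<notin> B" for p using pi_PP[OF Bpi] by auto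
  moreover have "(a,b) \<in> EE \<Longrightarrow> (a \<in> B \<longleftrightarrow> b \<in> B)" for a b
  proof -
    assume ab: "(a,b) \<in> EE"
    then have aO: "a \<in> OS" "b \<in> OS" by (auto simp: EE_iff)
    have "(a,b) \<in> RR" using ab by blast
    then have "cmp a = cmp b" by (rule cmp_eq)
    moreover have "cmp a \<in> \<pi>" using cmp_phi[OF aO(1)] phi_pi by blast
    moreover have "a \<in> cmp a" "b \<in> cmp b" using cmp_self aO by auto
    ultimately show ?thesis using pi_disj[OF Bpi, of "cmp a" a] pi_disj[OF Bpi, of "cmp a" b] by auto
  qed
  ultimately show ?thesis unfolding V0_def ind_def by auto
qed

lemma ind_span_DD: "B \<in> Bs0 \<Longrightarrow> ind B \<in> span DD"
proof -
  assume B: "B \<in> Bs0"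
  obtain e where e: "e > 0" "z + e *\<^sub>R ind B \<in> GS" using perturb[OF ind_V0[OF B]] by blast
  have "(z + e *\<^sub>R ind B) - z \<in> DD" unfolding DD_def using e(2) GS_F z_F by blast
  then have "e *\<^sub>R ind B \<in> span DD" by (simp add: span_base)
  then have "(1/e) *\<^sub>R (e *\<^sub>R ind B) \<in> span DD" by (rule span_scale)
  then show ?thesis using e(1) by simp
qed

lemma ind_inj: "inj ind"
proof (rule injI)
  fix A B assume "ind A = ind B"
  then have "\<forall>p. (p \<in> A) = (p \<in> B)" unfolding ind_def by (metis one_neq_zero)
  then show "A = B" by blast
qed

lemma indep: "independent (ind ` Bs0)"
proof (rule independent_if_scalars_zero)
  show "finite (ind ` Bs0)" using Bs0_fin by simp
next
  fix f and x assume sum0: "(\<Sum>x\<in>ind ` Bs0. f x *\<^sub>R x) = 0" and x: "x \<in> ind ` Bs0"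
  then obtain B0 where B0: "B0 \<in> Bs0" "x = ind B0" by blast
  have "(\<Sum>x\<in>ind ` Bs0. f x *\<^sub>R x) = (\<Sum>B\<in>Bs0. f (ind B) *\<^sub>R ind B)"
  proof -
    have "inj_on ind Bs0" using ind_inj by (rule inj_on_subset) simp
    then show ?thesis by (simp add: sum.reindex)
  qed
  then have s: "(\<Sum>B\<in>Bs0. f (ind B) *\<^sub>R ind B) = 0" using sum0 by simp
  have Bpi: "B0 \<in> \<pi>" using B0 unfolding Bs0_def by simp
  obtain p where p: "p \<in> B0" using pi_ne[OF Bpi] by blast
  have pP: "p \<in> PP" using pi_PP[OF Bpi] p by blast
  have "block_of \<pi> p = B0" using block_of_eq[OF Bpi p] .
  then have "(\<Sum>B\<in>Bs0. f (ind B) *\<^sub>R ind B) p = f (ind B0)"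
    using sum_ind_apply[OF pP, of "\<lambda>B. f (ind B)"] B0 by simp
  then show "f x = 0" using s B0 by simp
qed

lemma affdim_F: "affdim F = card \<pi> - 2"
proof -
  have "span DD = span (ind ` Bs0)"
    unfolding span_eq using DD_V0 V0_span ind_span_DD by blast
  then have "dim DD = dim (ind ` Bs0)" by (metis dim_span)
  also have "\<dots> = card (ind ` Bs0)" using indep by (rule dim_eq_card_independent)
  also have "\<dots> = card Bs0" using ind_inj by (intro card_image) (rule inj_on_subset, auto)
  also have "\<dots> = card \<pi> - 2"
  proof -
    have "{hat0} \<noteq> TT" using phi_Cpi[OF T_phi] hat0_C by auto
    moreover have "{{hat0}, TT} \<subseteq> \<pi>" using hat0_block T_phi phi_pi by auto
    ultimately show ?thesis unfolding Bs0_def using pi_fin by (simp add: card_Diff_subset)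
  qed
  finally show ?thesis unfolding affdim_def DD_def .
qed

lemma card_Y_mid: "1 \<le> i \<Longrightarrow> i \<le> L \<Longrightarrow> card (Y \<tau> i) = \<tau> ! (i - 1)"
proof -
  assume i: "1 \<le> i" "i \<le> L"
  then have "Y \<tau> i = (\<lambda>j. (i,j)) ` {1..\<tau> ! (i - 1)}" unfolding Y_def by auto
  moreover have "inj_on (\<lambda>j. (i,j)) {1..\<tau> ! (i - 1)}" by (auto simp: inj_on_def)
  ultimately show ?thesis by (simp add: card_image)
qed

lemma card_PP: "card PP = sum_list \<tau> + 2"
proof -
  have "card PP = (\<Sum>i\<in>{0..Suc L}. card (Y \<tau> i))"
    unfolding Phat_def
  proof (rule card_UN_disjoint)
    show "finite {0..Suc L}" by simp
    show "\<forall>i\<in>{0..Suc L}. finite (Y \<tau> i)" using Y_finite by blast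
    show "\<forall>i\<in>{0..Suc L}. \<forall>j\<in>{0..Suc L}. i \<noteq> j \<longrightarrow> Y \<tau> i \<inter> Y \<tau> j = {}"
      using Y_fst by blast
  qed
  also have "\<dots> = (\<Sum>i<Suc (Suc L). card (Y \<tau> i))"
    by (rule sum.cong) auto
  also have "\<dots> = card (Y \<tau> 0) + (\<Sum>i<L. card (Y \<tau> (Suc i))) + card (Y \<tau> (Suc L))"
    by (subst sum.lessThan_Suc) (subst sum.lessThan_Suc_shift, simp)
  also have "(\<Sum>i<L. card (Y \<tau> (Suc i))) = (\<Sum>i<L. \<tau> ! i)"
    by (rule sum.cong) (auto simp: card_Y_mid)
  also have "\<dots> = sum_list \<tau>" by (simp add: sum_list_sum_nth atLeast0LessThan)
  also have "card (Y \<tau> 0) = 1" by (simp add: Y_def)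
  also have "card (Y \<tau> (Suc L)) = 1" by (simp add: Y_def)
  finally show ?thesis by simp
qed

lemma card_CO: "card PP = card CS + card OS"
proof -
  have "PP = CS \<union> OS" using PP_CO by blast
  moreover have "CS \<inter> OS = {}" using CO_disj by blast
  ultimately show ?thesis using CS_fin OS_fin by (simp add: card_Un_disjoint)
qed

lemma card_pi: "card \<pi> = card \<phi> + card CS"
proof -
  have "\<pi> = \<phi> \<union> Cpi" unfolding pi_part_def by simp
  moreover have "\<phi> \<inter> Cpi = {}" using phi_Cpi by blast
  moreover have "card Cpi = card CS" by (rule card_image) (auto simp: inj_on_def)
  ultimately show ?thesis using phi_fin CS_fin by (simp add: card_Un_disjoint)
qed

lemma card_pi2: "2 \<le> card \<pi>"
proof -
  have "{hat0} \<noteq> TT" using phi_Cpi[OF T_phi] hat0_C by auto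
  moreover have "{{hat0}, TT} \<subseteq> \<pi>" using hat0_block T_phi phi_pi by auto
  ultimately have "card {{hat0}, TT} \<le> card \<pi>" using pi_fin by (intro card_mono) auto
  then show ?thesis using \<open>{hat0} \<noteq> TT\<close> by simp
qed

lemma codim: "int (sum_list \<tau>) - int (affdim F) = int (card OS) - int (card \<phi>)"
  using affdim_F card_PP card_CO card_pi card_pi2 by simp

end

theorem proposition3p4:
  fixes \<tau> :: "nat list" and k :: nat and F :: "((nat \<times> nat) \<Rightarrow> real) set"
  assumes pos: "\<forall>t\<in>set \<tau>. 0 < t"
    and k: "k \<le> length \<tau>"
    and face: "F face_of chain_order_polytope \<tau> k"
    and ne: "F \<noteq> {}"
    and nonneg_not_tight: "\<forall>p\<in>Cset \<tau> k - {hat0}. \<not> (\<forall>x\<in>F. x p = 0)"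
    and chain_not_tight: "\<forall>ps q. (\<forall>i\<in>{1..k}. ps i \<in> Y \<tau> i) \<and> q \<in> Y \<tau> (Suc k) \<longrightarrow>
                              \<not> (\<forall>x\<in>F. (\<Sum>i=1..k. x (ps i)) = x q)"
  shows "compatible ple (pi_part \<tau> k F)
    \<and> {hat0} \<in> pi_part \<tau> k F
    \<and> (\<forall>B\<in>pi_part \<tau> k F. quot_le ple (pi_part \<tau> k F) {hat0} B)
    \<and> top_block \<tau> k F \<in> assoc_partition \<tau> k F
    \<and> hat1 \<tau> \<in> top_block \<tau> k F
    \<and> (\<forall>B\<in>pi_part \<tau> k F. quot_le ple (pi_part \<tau> k F) B (top_block \<tau> k F))
    \<and> linear (lift_map \<tau> k F)
    \<and> bij_betw (lift_map \<tau> k F) (quot_polytope \<tau> k F) F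
    \<and> int (sum_list \<tau>) - int (affdim F)
        = int (card (Oset \<tau> k)) - int (card (assoc_partition \<tau> k F))"
proof -
  interpret P: pset \<tau> k F using assms by unfold_locales
  show ?thesis
    using P.compat P.hat0_block P.qle_bot P.T_phi P.hat1_T P.qle_top P.lift_linear P.bij P.codim
    by blast
qed

end
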